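(* If $n\geq 13$, then $t(K(n,4))=\frac{n}{4}-1$. Moreover, if $S$ is a vertex cut of $K(n,4)$ such that $\frac{|S|}{c(K(n,4)\setminus S)} = \frac{n}{4}-1$, then $S$ is the complement of a maximum independent set of $K(n,4)$.
   Context: The Kneser graph $K(n,k)$ has as vertices the $k$-element subsets of $[n]=\{1,\dots,n\}$, two vertices being adjacent iff they are disjoint. A vertex cut is a set $S$ of vertices whose removal disconnects the graph; $c(G\setminus S)$ is the number of connected components after deleting $S$; the toughness is $t(G)=\min_S |S|/c(G\setminus S)$ over vertex cuts $S$. *)

theory Defs
  imports Main "HOL-Library.Disjoint_Sets" Complex_Main
begin

text \<open>Simple graphs given by a vertex set V and a symmetric adjacency predicate E.\<close>

definition kneser_vertices :: "nat \<Rightarrow> nat \<Rightarrow> nat set set" where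
  "kneser_vertices n k = {A. A \<subseteq> {1..n} \<and> card A = k}"

definition kneser_adj :: "nat set \<Rightarrow> nat set \<Rightarrow> bool" where
  "kneser_adj A B \<longleftrightarrow> A \<inter> B = {}"

inductive reach_in :: "'a set \<Rightarrow> ('a \<Rightarrow> 'a \<Rightarrow> bool) \<Rightarrow> 'a \<Rightarrow> 'a \<Rightarrow> bool"
  for W E where
  refl: "x \<in> W \<Longrightarrow> reach_in W E x x"
| step: "reach_in W E x y \<Longrightarrow> z \<in> W \<Longrightarrow> E y z \<Longrightarrow> reach_in W E x z"

definition components_in :: "'a set \<Rightarrow> ('a \<Rightarrow> 'a \<Rightarrow> bool) \<Rightarrow> 'a set set" where
  "components_in W E = {{y. reach_in W E x y} | x. x \<in> W}"

definition num_components :: "'a set \<Rightarrow> ('a \<Rightarrow> 'a \<Rightarrow> bool) \<Rightarrow> nat" where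
  "num_components W E = card (components_in W E)"

definition vertex_cut :: "'a set \<Rightarrow> ('a \<Rightarrow> 'a \<Rightarrow> bool) \<Rightarrow> 'a set \<Rightarrow> bool" where
  "vertex_cut V E S \<longleftrightarrow> S \<subseteq> V \<and> num_components (V - S) E \<ge> 2"

definition toughness :: "'a set \<Rightarrow> ('a \<Rightarrow> 'a \<Rightarrow> bool) \<Rightarrow> real" where
  "toughness V E = (INF S \<in> {S. vertex_cut V E S}. real (card S) / real (num_components (V - S) E))"

definition independent_set :: "'a set \<Rightarrow> ('a \<Rightarrow> 'a \<Rightarrow> bool) \<Rightarrow> 'a set \<Rightarrow> bool" where
  "independent_set V E I \<longleftrightarrow> I \<subseteq> V \<and> (\<forall>x\<in>I. \<forall>y\<in>I. \<not> E x y)"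

definition max_independent_set :: "'a set \<Rightarrow> ('a \<Rightarrow> 'a \<Rightarrow> bool) \<Rightarrow> 'a set \<Rightarrow> bool" where
  "max_independent_set V E I \<longleftrightarrow> independent_set V E I \<and>
     (\<forall>J. independent_set V E J \<longrightarrow> card J \<le> card I)"

end

theory Submission
  imports Defs "HOL-Library.FuncSet"
begin

definition arc :: "nat \<Rightarrow> nat \<Rightarrow> nat set" where
  "arc m i = (\<lambda>r. (i + r) mod m) ` {..<4}"

definition close :: "nat \<Rightarrow> nat \<Rightarrow> nat \<Rightarrow> bool" where
  "close m i j \<longleftrightarrow> (i \<le> j \<and> j \<le> i + 3) \<or> (j \<le> i \<and> i \<le> j + 3) \<or> j + m \<le> i + 3 \<or> i + m \<le> j + 3"

lemma mod_lt2: "(x::nat) < 2 * m \<Longrightarrow> x mod m = (if x < m then x else x - m)"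
proof (cases "x < m")
  case True then show ?thesis by simp
next
  case False
  assume "x < 2 * m"
  then have "x - m < m" using False by simp
  then show ?thesis using False le_mod_geq[of m x] by simp
qed

lemma lt4_cases: "(r::nat) < 4 \<longleftrightarrow> r = 0 \<or> r = 1 \<or> r = 2 \<or> r = 3"
  by auto

lemma arc_mem: "x \<in> arc m i \<longleftrightarrow> (\<exists>r<4. x = (i + r) mod m)"
  unfolding arc_def by auto

lemma arc_subset: "0 < m \<Longrightarrow> arc m i \<subseteq> {..<m}"
  unfolding arc_def by auto

lemma card_arc:
  assumes "4 \<le> m" "i < m"
  shows "card (arc m i) = 4"
proof -
  have "inj_on (\<lambda>r. (i + r) mod m) {..<4}"
  proof
    fix r s assume r: "r \<in> {..<(4::nat)}" and s: "s \<in> {..<(4::nat)}"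
      and e: "(i + r) mod m = (i + s) mod m"
    have "i + r < 2 * m" "i + s < 2 * m" using r s assms by auto
    then show "r = s" using e mod_lt2[of "i+r" m] mod_lt2[of "i+s" m] r s assms
      by (auto split: if_splits)
  qed
  then show ?thesis unfolding arc_def by (simp add: card_image)
qed

lemma arc_inter_iff:
  assumes m: "4 \<le> m" and i: "i < m" and j: "j < m"
  shows "arc m i \<inter> arc m j \<noteq> {} \<longleftrightarrow> close m i j"
proof
  assume "arc m i \<inter> arc m j \<noteq> {}"
  then obtain x where "x \<in> arc m i" "x \<in> arc m j" by blast
  then obtain r s where r: "r < 4" and s: "s < 4" and e: "(i + r) mod m = (j + s) mod m"
    unfolding arc_mem by metis
  have "i + r < 2 * m" "j + s < 2 * m" using r s m i j by auto
  then show "close m i j" using e mod_lt2[of "i+r" m] mod_lt2[of "j+s" m] r s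
    unfolding close_def by (auto split: if_splits)
next
  assume cl0: "close m i j"
  have ex: "\<exists>r s. r < 4 \<and> s < 4 \<and> (i + r) mod m = (j + s) mod m"
  proof -
    have z4: "(0::nat) < 4" by simp
    consider (a) "i \<le> j \<and> j \<le> i + 3" | (b) "j \<le> i \<and> i \<le> j + 3" | (c) "j + m \<le> i + 3"
      | (d) "i + m \<le> j + 3" using cl0 unfolding close_def by blast
    then show ?thesis
    proof cases
      case a
      then have "(i + (j - i)) mod m = (j + 0) mod m" "j - i < 4" by auto
      then show ?thesis using z4 by blast
    next
      case b
      then have "(i + 0) mod m = (j + (i - j)) mod m" "i - j < 4" by auto
      then show ?thesis using z4 by blast
    next
      case c
      have "(i + (j + m - i)) mod m = (j + 0) mod m" using i by simp
      moreover have "j + m - i < 4" using c by simp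
      ultimately show ?thesis using z4 by blast
    next
      case d
      have "(i + 0) mod m = (j + (i + m - j)) mod m" using j by simp
      moreover have "i + m - j < 4" using d by simp
      ultimately show ?thesis using z4 by blast
    qed
  qed
  then obtain r s where "r < 4" "s < 4" "(i + r) mod m = (j + s) mod m" by blast
  then have "(i + r) mod m \<in> arc m i" "(i + r) mod m \<in> arc m j" unfolding arc_mem by auto
  then show "arc m i \<inter> arc m j \<noteq> {}" by blast
qed

lemma close_card_le4:
  assumes m: "8 \<le> m" and J: "J \<subseteq> {..<m}" and cl: "\<And>i j. i \<in> J \<Longrightarrow> j \<in> J \<Longrightarrow> close m i j"
  shows "card J \<le> 4"
proof (cases "J = {}")
  case True then show ?thesis by simp
next
  case False
  then obtain i0 where i0: "i0 \<in> J" by blast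
  define f where "f j = (let d = (if i0 \<le> j then j - i0 else j + m - i0) in if d \<le> 3 then d else d + 4 - m)" for j
  have i0m: "i0 < m" using i0 J by auto
  have range: "f j \<in> {..<4}" if "j \<in> J" for j
  proof -
    have "j < m" using that J by auto
    moreover have "close m i0 j" using cl[OF i0 that] .
    ultimately show ?thesis unfolding f_def close_def Let_def using i0m by auto
  qed
  have inj: "inj_on f J"
  proof
    fix j k assume j: "j \<in> J" and k: "k \<in> J" and e: "f j = f k"
    have jm: "j < m" and km: "k < m" using j k J by auto
    have c1: "close m i0 j" "close m i0 k" "close m j k" using cl i0 j k by auto
    show "j = k" using e jm km c1 i0m m unfolding f_def close_def Let_def
      by (auto split: if_splits)
  qed
  have "card J = card (f ` J)" using card_image[OF inj] by simp
  also have "\<dots> \<le> card {..<(4::nat)}" by (rule card_mono) (use range in auto)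
  finally show ?thesis by simp
qed

lemma weighted_hall:
  fixes R :: "'a \<Rightarrow> 'b \<Rightarrow> bool"
  assumes fL: "finite L" and fM: "finite M" and BL: "B \<subseteq> L"
  and deg: "\<And>x y. x \<in> L \<Longrightarrow> y \<in> M \<Longrightarrow> R x y \<Longrightarrow>
              card {y'\<in>M. R x y'} = card {x'\<in>L. R x' y}"
  and pos: "\<And>x. x \<in> B \<Longrightarrow> \<exists>y\<in>M. R x y"
  shows "card B \<le> card {y\<in>M. \<exists>x\<in>B. R x y}"
proof -
  define NB where "NB = {y\<in>M. \<exists>x\<in>B. R x y}"
  define dL where "dL x = card {y'\<in>M. R x y'}" for x
  define dM where "dM y = card {x'\<in>L. R x' y}" for y
  have fB: "finite B" using fL BL finite_subset by blast
  have fNB: "finite NB" using fM NB_def by simp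
  have dLpos: "dL x > 0" if "x \<in> B" for x
    using pos[OF that] fM unfolding dL_def
    by (metis (mono_tags, lifting) card_gt_0_iff empty_iff finite_subset mem_Collect_eq subsetI)
  have dMpos: "dM y > 0" if "y \<in> NB" for y
  proof -
    from that obtain x where "x \<in> B" "R x y" unfolding NB_def by auto
    then have "x \<in> {x'\<in>L. R x' y}" using BL by auto
    then show ?thesis unfolding dM_def using fL
      by (metis (no_types, lifting) card_gt_0_iff empty_iff finite_subset mem_Collect_eq subsetI)
  qed
  have "real (card B) = (\<Sum>x\<in>B. 1)" by simp
  also have "\<dots> = (\<Sum>x\<in>B. \<Sum>y\<in>{y\<in>NB. R x y}. 1 / real (dL x))"
  proof (rule sum.cong[OF HOL.refl])
    fix x assume xB: "x \<in> B"
    have e: "{y\<in>NB. R x y} = {y'\<in>M. R x y'}" unfolding NB_def using xB by auto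
    show "1 = (\<Sum>y\<in>{y\<in>NB. R x y}. 1 / real (dL x))"
      using dLpos[OF xB] by (simp add: e dL_def)
  qed
  also have "\<dots> = (\<Sum>y\<in>NB. \<Sum>x | x \<in> B \<and> R x y. 1 / real (dL x))"
    by (rule sum.swap_restrict[OF fB fNB])
  also have "\<dots> \<le> (\<Sum>y\<in>NB. 1)"
  proof (rule sum_mono)
    fix y assume yNB: "y \<in> NB"
    have "(\<Sum>x | x \<in> B \<and> R x y. 1 / real (dL x)) = (\<Sum>x | x \<in> B \<and> R x y. 1 / real (dM y))"
    proof (rule sum.cong[OF HOL.refl])
      fix x assume "x \<in> {x. x \<in> B \<and> R x y}"
      then have "x \<in> L" "R x y" using BL by auto
      moreover have "y \<in> M" using yNB NB_def by auto
      ultimately show "1 / real (dL x) = 1 / real (dM y)" using deg unfolding dL_def dM_def by simp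
    qed
    also have "\<dots> = real (card {x. x \<in> B \<and> R x y}) / real (dM y)" by simp
    also have "\<dots> \<le> 1"
    proof -
      have "card {x. x \<in> B \<and> R x y} \<le> dM y" unfolding dM_def
        by (rule card_mono) (use fL BL in auto)
      then show ?thesis using dMpos[OF yNB] by simp
    qed
    finally show "(\<Sum>x | x \<in> B \<and> R x y. 1 / real (dL x)) \<le> 1" .
  qed
  also have "\<dots> = real (card NB)" by simp
  finally show ?thesis unfolding NB_def by simp
qed

lemma reach_in_mem: "reach_in W E x y \<Longrightarrow> x \<in> W \<and> y \<in> W"
  by (induction rule: reach_in.induct) auto

lemma reach_in_trans: "reach_in W E y z \<Longrightarrow> reach_in W E x y \<Longrightarrow> reach_in W E x z"
proof (induction rule: reach_in.induct)
  case (refl x) then show ?case by simp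
next
  case (step x y z)
  show ?case by (rule reach_in.step[OF step.IH[OF step.prems] step.hyps(2) step.hyps(3)])
qed

lemma reach_in_edge: "x \<in> W \<Longrightarrow> y \<in> W \<Longrightarrow> E x y \<Longrightarrow> reach_in W E x y"
  by (meson reach_in.refl reach_in.step)

lemma reach_in_sym:
  assumes sym: "\<And>a b. E a b \<Longrightarrow> E b a"
  shows "reach_in W E x y \<Longrightarrow> reach_in W E y x"
proof (induction rule: reach_in.induct)
  case (refl x) then show ?case by (rule reach_in.refl)
next
  case (step x y z)
  have "y \<in> W" using reach_in_mem[OF step.hyps(1)] by simp
  then have "reach_in W E z y" using reach_in_edge[of z W y E] step.hyps(2,3) sym by simp
  then show ?case using reach_in_trans[OF step.IH] by simp
qed

definition comp_of :: "'a set \<Rightarrow> ('a \<Rightarrow> 'a \<Rightarrow> bool) \<Rightarrow> 'a \<Rightarrow> 'a set" where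
  "comp_of W E x = {y. reach_in W E x y}"

lemma components_in_alt: "components_in W E = comp_of W E ` W"
  unfolding components_in_def comp_of_def by auto

lemma comp_of_in: "x \<in> W \<Longrightarrow> comp_of W E x \<in> components_in W E"
  by (simp add: components_in_alt)

lemma comp_of_self: "x \<in> W \<Longrightarrow> x \<in> comp_of W E x"
  unfolding comp_of_def by (simp add: reach_in.refl)

lemma comp_subset: "K \<in> components_in W E \<Longrightarrow> K \<subseteq> W"
proof
  fix y assume K: "K \<in> components_in W E" and y: "y \<in> K"
  from K obtain x where "K = comp_of W E x" unfolding components_in_alt by auto
  with y have "reach_in W E x y" unfolding comp_of_def by simp
  then show "y \<in> W" using reach_in_mem by metis
qed

lemma comp_nonempty: "K \<in> components_in W E \<Longrightarrow> K \<noteq> {}"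
proof -
  assume K: "K \<in> components_in W E"
  from K obtain x where "x \<in> W" "K = comp_of W E x" unfolding components_in_alt by auto
  then show ?thesis using comp_of_self[of x W E] by auto
qed

lemma comp_eq:
  assumes sym: "\<And>a b. E a b \<Longrightarrow> E b a"
  and K: "K \<in> components_in W E" and y: "y \<in> K"
  shows "K = comp_of W E y"
proof -
  obtain x where x: "x \<in> W" "K = comp_of W E x" using K unfolding components_in_alt by auto
  have xy: "reach_in W E x y" using y x unfolding comp_of_def by auto
  have yx: "reach_in W E y x" using reach_in_sym[OF sym xy] .
  show ?thesis unfolding x comp_of_def
  proof (intro set_eqI iffI; simp)
    fix z assume "reach_in W E x z" then show "reach_in W E y z" using reach_in_trans[OF _ yx] by simp
  next
    fix z assume "reach_in W E y z" then show "reach_in W E x z" using reach_in_trans[OF _ xy] by simp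
  qed
qed

lemma comp_closed:
  assumes sym: "\<And>a b. E a b \<Longrightarrow> E b a"
  and K: "K \<in> components_in W E" and x: "x \<in> K" and y: "y \<in> W" and e: "E x y"
  shows "y \<in> K"
proof -
  have "K = comp_of W E x" using comp_eq[OF sym K x] .
  moreover have "x \<in> W" using comp_subset[OF K] x by blast
  then have "reach_in W E x y" using reach_in_edge y e by metis
  ultimately show ?thesis unfolding comp_of_def by simp
qed

lemma comp_disjoint:
  assumes sym: "\<And>a b. E a b \<Longrightarrow> E b a"
  and K1: "K1 \<in> components_in W E" and K2: "K2 \<in> components_in W E"
  and x1: "x \<in> K1" and x2: "x \<in> K2"
  shows "K1 = K2"
  using comp_eq[OF sym K1 x1] comp_eq[OF sym K2 x2] by simp

lemma comp_no_edge:
  assumes sym: "\<And>a b. E a b \<Longrightarrow> E b a"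
  and K1: "K1 \<in> components_in W E" and K2: "K2 \<in> components_in W E"
  and x: "x \<in> K1" and y: "y \<in> K2" and ne: "K1 \<noteq> K2"
  shows "\<not> E x y"
proof
  assume e: "E x y"
  have "y \<in> K1" using comp_closed[OF sym K1 x _ e] comp_subset[OF K2] y by blast
  then show False using comp_disjoint[OF sym K1 K2 \<open>y \<in> K1\<close> y] ne by simp
qed

lemma finite_components: "finite W \<Longrightarrow> finite (components_in W E)"
  by (simp add: components_in_alt)

lemma comp_cover: "x \<in> W \<Longrightarrow> \<exists>K\<in>components_in W E. x \<in> K"
  using comp_of_in[of x W E] comp_of_self[of x W E] by (intro bexI)

lemma kneser_adj_sym: "kneser_adj a b \<Longrightarrow> kneser_adj b a"
  unfolding kneser_adj_def by auto

definition bijs :: "'a set \<Rightarrow> nat \<Rightarrow> (nat \<Rightarrow> 'a) set" where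
  "bijs Y m = {\<sigma> \<in> {..<m} \<rightarrow>\<^sub>E Y. bij_betw \<sigma> {..<m} Y}"

definition cnt :: "'a set set \<Rightarrow> nat \<Rightarrow> (nat \<Rightarrow> 'a) \<Rightarrow> nat" where
  "cnt F m \<sigma> = card {i \<in> {..<m}. \<sigma> ` arc m i \<in> F}"

definition Nset :: "'a set \<Rightarrow> nat \<Rightarrow> 'a set \<Rightarrow> ((nat \<Rightarrow> 'a) \<times> nat) set" where
  "Nset Y m G = {(\<sigma>, i). \<sigma> \<in> bijs Y m \<and> i < m \<and> \<sigma> ` arc m i = G}"

lemma finite_bijs: "finite Y \<Longrightarrow> finite (bijs Y m)"
  unfolding bijs_def by (rule finite_subset[of _ "{..<m} \<rightarrow>\<^sub>E Y"]) (auto intro: finite_PiE)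

lemma bijs_nonempty:
  assumes "finite Y" "card Y = m"
  shows "bijs Y m \<noteq> {}"
proof -
  obtain h where h: "bij_betw h {0..<card Y} Y" using ex_bij_betw_nat_finite[OF assms(1)] by blast
  then have h': "bij_betw h {..<m} Y" using assms(2) by (simp add: atLeast0LessThan)
  have "restrict h {..<m} \<in> bijs Y m"
    unfolding bijs_def using h' bij_betwE[OF h']
    by (auto simp: bij_betw_cong[of "{..<m}" "restrict h {..<m}" h])
  then show ?thesis by blast
qed

lemma local_cnt:
  assumes m: "8 \<le> m" and s: "\<sigma> \<in> bijs Y m"
  and F: "\<And>A B. A \<in> F \<Longrightarrow> B \<in> F \<Longrightarrow> A \<inter> B \<noteq> {}"
  shows "cnt F m \<sigma> \<le> 4"
proof -
  have inj: "inj_on \<sigma> {..<m}" using s unfolding bijs_def bij_betw_def by auto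
  define J where "J = {i \<in> {..<m}. \<sigma> ` arc m i \<in> F}"
  have "close m i j" if i: "i \<in> J" and j: "j \<in> J" for i j
  proof -
    have im: "i < m" and jm: "j < m" using i j J_def by auto
    have "\<sigma> ` arc m i \<inter> \<sigma> ` arc m j \<noteq> {}" using F i j J_def by auto
    then obtain a b where a: "a \<in> arc m i" and b: "b \<in> arc m j" and e: "\<sigma> a = \<sigma> b" by blast
    have "a < m" "b < m" using a b arc_subset[of m] m by auto
    then have "a = b" using inj e by (auto dest: inj_onD)
    then have "arc m i \<inter> arc m j \<noteq> {}" using a b by blast
    then show ?thesis using arc_inter_iff[of m i j] im jm m by simp
  qed
  then have "card J \<le> 4" using close_card_le4[OF m, of J] J_def by auto
  then show ?thesis unfolding cnt_def J_def .
qed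

lemma exists_perm:
  assumes fY: "finite Y" and G: "G \<subseteq> Y" and G': "G' \<subseteq> Y" and c: "card G = card G'"
  shows "\<exists>\<rho>. bij_betw \<rho> Y Y \<and> \<rho> ` G = G'"
proof -
  have fG: "finite G" "finite G'" using fY G G' finite_subset by auto
  obtain g where g: "bij_betw g G G'" using finite_same_card_bij[OF fG c] by blast
  have "card (Y - G) = card (Y - G')" using c G G' fY fG by (simp add: card_Diff_subset)
  then obtain h where h: "bij_betw h (Y - G) (Y - G')"
    using finite_same_card_bij[of "Y - G" "Y - G'"] fY by blast
  define \<rho> where "\<rho> x = (if x \<in> G then g x else h x)" for x
  have b1: "bij_betw \<rho> G G'" using g by (rule bij_betw_cong[THEN iffD1, rotated]) (simp add: \<rho>_def)
  have b2: "bij_betw \<rho> (Y - G) (Y - G')" using h by (rule bij_betw_cong[THEN iffD1, rotated]) (simp add: \<rho>_def)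
  have "bij_betw \<rho> (G \<union> (Y - G)) (G' \<union> (Y - G'))" by (rule bij_betw_combine[OF b1 b2]) auto
  moreover have "G \<union> (Y - G) = Y" "G' \<union> (Y - G') = Y" using G G' by auto
  ultimately have "bij_betw \<rho> Y Y" by simp
  moreover have "\<rho> ` G = G'" using b1 bij_betw_imp_surj_on by blast
  ultimately show ?thesis by blast
qed

lemma Nset_le:
  assumes fY: "finite Y" and m: "0 < m"
  and G: "G \<subseteq> Y" and G': "G' \<subseteq> Y" and c: "card G = card G'"
  shows "card (Nset Y m G) \<le> card (Nset Y m G')"
proof -
  obtain \<rho> where \<rho>: "bij_betw \<rho> Y Y" "\<rho> ` G = G'" using exists_perm[OF fY G G' c] by blast
  define \<Phi> where "\<Phi> p = (restrict (\<rho> \<circ> fst p) {..<m}, snd p)" for p :: "(nat \<Rightarrow> 'a) \<times> nat"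
  have fin: "finite (Nset Y m G')"
    by (rule finite_subset[of _ "bijs Y m \<times> {..<m}"]) (auto simp: Nset_def finite_bijs[OF fY])
  have inj: "inj_on \<Phi> (Nset Y m G)"
  proof
    fix p q assume p: "p \<in> Nset Y m G" and q: "q \<in> Nset Y m G" and e: "\<Phi> p = \<Phi> q"
    obtain \<sigma> i where pp: "p = (\<sigma>, i)" and s: "\<sigma> \<in> bijs Y m" using p unfolding Nset_def by auto
    obtain \<tau> j where qq: "q = (\<tau>, j)" and t: "\<tau> \<in> bijs Y m" using q unfolding Nset_def by auto
    have ij: "i = j" using e pp qq \<Phi>_def by simp
    have "\<sigma> k = \<tau> k" for k
    proof (cases "k < m")
      case True
      have "restrict (\<rho> \<circ> \<sigma>) {..<m} k = restrict (\<rho> \<circ> \<tau>) {..<m} k" using e pp qq \<Phi>_def by simp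
      then have "\<rho> (\<sigma> k) = \<rho> (\<tau> k)" using True by simp
      moreover have "\<sigma> k \<in> Y" "\<tau> k \<in> Y" using s t True unfolding bijs_def by auto
      ultimately show ?thesis using \<rho>(1) unfolding bij_betw_def by (auto dest: inj_onD)
    next
      case False
      then show ?thesis using s t unfolding bijs_def PiE_def extensional_def by auto
    qed
    then show "p = q" using pp qq ij by auto
  qed
  have img: "\<Phi> ` Nset Y m G \<subseteq> Nset Y m G'"
  proof
    fix x assume "x \<in> \<Phi> ` Nset Y m G"
    then obtain \<sigma> i where s: "\<sigma> \<in> bijs Y m" and i: "i < m" and a: "\<sigma> ` arc m i = G"
      and x: "x = \<Phi> (\<sigma>, i)" unfolding Nset_def by auto
    have sb: "bij_betw \<sigma> {..<m} Y" using s unfolding bijs_def by auto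
    have "bij_betw (\<rho> \<circ> \<sigma>) {..<m} Y" using bij_betw_trans[OF sb \<rho>(1)] .
    then have b: "bij_betw (restrict (\<rho> \<circ> \<sigma>) {..<m}) {..<m} Y"
      by (rule bij_betw_cong[THEN iffD1, rotated]) simp
    have pe: "restrict (\<rho> \<circ> \<sigma>) {..<m} \<in> {..<m} \<rightarrow>\<^sub>E Y"
      using b bij_betwE by (auto simp: PiE_def)
    have "restrict (\<rho> \<circ> \<sigma>) {..<m} ` arc m i = \<rho> ` (\<sigma> ` arc m i)"
      using arc_subset[OF m, of i] by (auto simp: image_iff)
    then have "restrict (\<rho> \<circ> \<sigma>) {..<m} ` arc m i = G'" using a \<rho>(2) by simp
    then show "x \<in> Nset Y m G'" using x pe b i unfolding Nset_def bijs_def \<Phi>_def by auto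
  qed
  show ?thesis using card_inj_on_le[OF inj img fin] .
qed

lemma sum_cnt:
  assumes fY: "finite Y" and F: "F \<subseteq> {A. A \<subseteq> Y \<and> card A = 4}"
  shows "(\<Sum>\<sigma>\<in>bijs Y m. cnt F m \<sigma>) = (\<Sum>G\<in>F. card (Nset Y m G))"
proof -
  have "F \<subseteq> Pow Y" using F by auto
  then have fF: "finite F" using fY by (simp add: finite_subset)
  have fN: "finite (Nset Y m G)" for G
    by (rule finite_subset[of _ "bijs Y m \<times> {..<m}"]) (auto simp: Nset_def finite_bijs[OF fY])
  have "(\<Sum>\<sigma>\<in>bijs Y m. cnt F m \<sigma>) = card (SIGMA \<sigma>:bijs Y m. {i \<in> {..<m}. \<sigma> ` arc m i \<in> F})"
    unfolding cnt_def by (rule card_SigmaI[symmetric]) (auto simp: finite_bijs[OF fY])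
  also have "(SIGMA \<sigma>:bijs Y m. {i \<in> {..<m}. \<sigma> ` arc m i \<in> F}) = (\<Union>G\<in>F. Nset Y m G)"
    unfolding Nset_def by auto
  also have "card \<dots> = (\<Sum>G\<in>F. card (Nset Y m G))"
  proof (rule card_UN_disjoint[OF fF])
    show "\<forall>i\<in>F. finite (Nset Y m i)" using fN by blast
    show "\<forall>i\<in>F. \<forall>j\<in>F. i \<noteq> j \<longrightarrow> Nset Y m i \<inter> Nset Y m j = {}" unfolding Nset_def by auto
  qed
  finally show ?thesis .
qed

lemma ekr_general:
  assumes fY: "finite Y" and cY: "card Y = m" and m: "8 \<le> m"
  and F: "F \<subseteq> {A. A \<subseteq> Y \<and> card A = 4}"
  and inter: "\<And>A B. A \<in> F \<Longrightarrow> B \<in> F \<Longrightarrow> A \<inter> B \<noteq> {}"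
  shows "card F * m \<le> 4 * (m choose 4)"
    and "(\<exists>\<sigma>\<in>bijs Y m. cnt F m \<sigma> \<le> 3) \<Longrightarrow> card F * m < 4 * (m choose 4)"
proof -
  define Call where "Call = {A. A \<subseteq> Y \<and> card A = 4}"
  have m0: "0 < m" using m by simp
  obtain G0 where G0: "G0 \<subseteq> Y" "card G0 = 4"
    using obtain_subset_with_card_n[of 4 Y] cY m by auto
  define N where "N = card (Nset Y m G0)"
  have NG: "card (Nset Y m G) = N" if "G \<in> Call" for G
    using Nset_le[OF fY m0, of G G0] Nset_le[OF fY m0, of G0 G] that G0 unfolding N_def Call_def by auto
  have cCall: "card Call = m choose 4" unfolding Call_def using n_subsets[OF fY] cY by simp
  have fB: "finite (bijs Y m)" using finite_bijs[OF fY] .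
  have Bne: "bijs Y m \<noteq> {}" using bijs_nonempty[OF fY cY] .
  have cntall: "cnt Call m \<sigma> = m" if s: "\<sigma> \<in> bijs Y m" for \<sigma>
  proof -
    have sb: "bij_betw \<sigma> {..<m} Y" using s unfolding bijs_def by auto
    have "\<sigma> ` arc m i \<in> Call" if i: "i < m" for i
    proof -
      have sub: "arc m i \<subseteq> {..<m}" using arc_subset[OF m0] .
      have "inj_on \<sigma> (arc m i)" using sb sub unfolding bij_betw_def by (auto intro: inj_on_subset)
      then have "card (\<sigma> ` arc m i) = 4" using card_arc[of m i] m i by (simp add: card_image)
      moreover have "\<sigma> ` arc m i \<subseteq> Y" using sb sub bij_betwE by blast
      ultimately show ?thesis unfolding Call_def by simp
    qed
    then have "{i \<in> {..<m}. \<sigma> ` arc m i \<in> Call} = {..<m}" by auto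
    then show ?thesis unfolding cnt_def by simp
  qed
  have eq1: "m * card (bijs Y m) = (m choose 4) * N"
  proof -
    have "m * card (bijs Y m) = (\<Sum>\<sigma>\<in>bijs Y m. cnt Call m \<sigma>)" using cntall by simp
    also have "\<dots> = (\<Sum>G\<in>Call. card (Nset Y m G))" by (rule sum_cnt[OF fY]) (simp add: Call_def)
    also have "\<dots> = (\<Sum>G\<in>Call. N)" using NG by simp
    also have "\<dots> = (m choose 4) * N" using cCall by simp
    finally show ?thesis .
  qed
  have Npos: "0 < N"
  proof -
    have "0 < m * card (bijs Y m)" using m0 fB Bne by (simp add: card_gt_0_iff)
    then show ?thesis using eq1 by simp
  qed
  have FC: "F \<subseteq> Call" using F Call_def by simp
  have sumF: "(\<Sum>\<sigma>\<in>bijs Y m. cnt F m \<sigma>) = card F * N"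
  proof -
    have "(\<Sum>\<sigma>\<in>bijs Y m. cnt F m \<sigma>) = (\<Sum>G\<in>F. card (Nset Y m G))" by (rule sum_cnt[OF fY F])
    also have "\<dots> = (\<Sum>G\<in>F. N)" using NG FC by (intro sum.cong) auto
    finally show ?thesis by simp
  qed
  have loc: "cnt F m \<sigma> \<le> 4" if "\<sigma> \<in> bijs Y m" for \<sigma> using local_cnt[OF m that] inter by blast
  have le: "card F * N \<le> 4 * card (bijs Y m)"
  proof -
    have "(\<Sum>\<sigma>\<in>bijs Y m. cnt F m \<sigma>) \<le> (\<Sum>\<sigma>\<in>bijs Y m. 4)" using loc by (intro sum_mono) auto
    then show ?thesis using sumF by simp
  qed
  have key: "card F * N * m \<le> 4 * (m choose 4) * N"
  proof -
    have "card F * N * m \<le> 4 * card (bijs Y m) * m" using le by simp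
    also have "\<dots> = 4 * (m choose 4) * N" using eq1 by (simp add: algebra_simps)
    finally show ?thesis .
  qed
  then show "card F * m \<le> 4 * (m choose 4)" using Npos
    by (metis mult.assoc mult.commute mult_le_cancel2 not_gr0)
  assume "\<exists>\<sigma>\<in>bijs Y m. cnt F m \<sigma> \<le> 3"
  then obtain \<sigma>0 where s0: "\<sigma>0 \<in> bijs Y m" "cnt F m \<sigma>0 \<le> 3" by blast
  have lt: "card F * N < 4 * card (bijs Y m)"
  proof -
    have "(\<Sum>\<sigma>\<in>bijs Y m. cnt F m \<sigma>) < (\<Sum>\<sigma>\<in>bijs Y m. 4)"
    proof (rule sum_strict_mono_ex1[OF fB])
      show "\<forall>x\<in>bijs Y m. cnt F m x \<le> 4" using loc by blast
      have "cnt F m \<sigma>0 < 4" using s0(2) by simp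
      then show "\<exists>a\<in>bijs Y m. cnt F m a < 4" using s0(1) by blast
    qed
    then show ?thesis using sumF by simp
  qed
  have "card F * N * m < 4 * card (bijs Y m) * m" using lt m0 by simp
  also have "\<dots> = 4 * (m choose 4) * N" using eq1 by (simp add: algebra_simps)
  finally have "card F * m * N < 4 * (m choose 4) * N" by (simp add: algebra_simps)
  then show "card F * m < 4 * (m choose 4)" using mult_less_cancel2 by blast
qed

lemma count_split:
  assumes f1: "finite P1" and f2: "finite P2" and d: "P1 \<inter> P2 = {}"
  shows "card {Z. Z \<subseteq> P1 \<union> P2 \<and> card (Z \<inter> P1) = a \<and> card (Z \<inter> P2) = b}
         = (card P1 choose a) * (card P2 choose b)"
proof -
  define S1 where "S1 = {Z1. Z1 \<subseteq> P1 \<and> card Z1 = a}"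
  define S2 where "S2 = {Z2. Z2 \<subseteq> P2 \<and> card Z2 = b}"
  define g where "g = (\<lambda>(Z1::'a set, Z2). Z1 \<union> Z2)"
  have inj: "inj_on g (S1 \<times> S2)"
  proof
    fix p q assume p: "p \<in> S1 \<times> S2" and q: "q \<in> S1 \<times> S2" and e: "g p = g q"
    obtain p1 p2 where pp: "p = (p1, p2)" "p1 \<subseteq> P1" "p2 \<subseteq> P2" using p S1_def S2_def by auto
    obtain q1 q2 where qq: "q = (q1, q2)" "q1 \<subseteq> P1" "q2 \<subseteq> P2" using q S1_def S2_def by auto
    have e': "p1 \<union> p2 = q1 \<union> q2" using e pp qq g_def by simp
    have "p1 = (p1 \<union> p2) \<inter> P1" "q1 = (q1 \<union> q2) \<inter> P1" using pp qq d by auto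
    then have "p1 = q1" using e' by simp
    moreover have "p2 = (p1 \<union> p2) \<inter> P2" "q2 = (q1 \<union> q2) \<inter> P2" using pp qq d by auto
    then have "p2 = q2" using e' by simp
    ultimately show "p = q" using pp qq by simp
  qed
  have img: "g ` (S1 \<times> S2) = {Z. Z \<subseteq> P1 \<union> P2 \<and> card (Z \<inter> P1) = a \<and> card (Z \<inter> P2) = b}"
  proof (intro set_eqI iffI)
    fix Z assume "Z \<in> g ` (S1 \<times> S2)"
    then obtain Z1 Z2 where z: "Z = Z1 \<union> Z2" "Z1 \<subseteq> P1" "card Z1 = a" "Z2 \<subseteq> P2" "card Z2 = b"
      using S1_def S2_def g_def by auto
    have "Z \<inter> P1 = Z1" "Z \<inter> P2 = Z2" using z d by auto
    then show "Z \<in> {Z. Z \<subseteq> P1 \<union> P2 \<and> card (Z \<inter> P1) = a \<and> card (Z \<inter> P2) = b}" using z by auto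
  next
    fix Z assume "Z \<in> {Z. Z \<subseteq> P1 \<union> P2 \<and> card (Z \<inter> P1) = a \<and> card (Z \<inter> P2) = b}"
    then have z: "Z \<subseteq> P1 \<union> P2" "card (Z \<inter> P1) = a" "card (Z \<inter> P2) = b" by auto
    have "Z = g (Z \<inter> P1, Z \<inter> P2)" using z g_def by auto
    moreover have "(Z \<inter> P1, Z \<inter> P2) \<in> S1 \<times> S2" using z S1_def S2_def by auto
    ultimately show "Z \<in> g ` (S1 \<times> S2)" by blast
  qed
  have "card (g ` (S1 \<times> S2)) = card S1 * card S2" using card_image[OF inj] card_cartesian_product by simp
  moreover have "card S1 = card P1 choose a" "card S2 = card P2 choose b"
    using n_subsets[OF f1] n_subsets[OF f2] S1_def S2_def by auto
  ultimately show ?thesis using img by simp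
qed

lemma deg_count:
  assumes fU: "finite U" and AU: "A \<subseteq> U" and CU: "C \<subseteq> U" and XU: "X \<subseteq> U"
  and cX: "card X = 4" and XA: "X \<inter> A = {}" and i: "card (X \<inter> C) = i" and i1: "1 \<le> i"
  shows "card {Z. Z \<subseteq> U \<and> card Z = 4 \<and> Z \<inter> C = {} \<and> Z \<inter> A \<noteq> {} \<and> X \<inter> Z = {} \<and> card (Z \<inter> A) = i}
         = (card (A - C) choose i) * ((card U - card (A \<union> C) - (4 - i)) choose (4 - i))"
proof -
  define W where "W = U - (A \<union> C \<union> X)"
  have fX: "finite X" using fU XU finite_subset by blast
  have fA: "finite A" using fU AU finite_subset by blast
  have fC: "finite C" using fU CU finite_subset by blast
  have fW: "finite W" using fU W_def by simp
  have fAC: "finite (A - C)" using fA by simp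
  have dW: "(A - C) \<inter> W = {}" using W_def by auto
  have i4: "i \<le> 4" using i cX card_mono[OF fX, of "X \<inter> C"] by auto
  have eq: "{Z. Z \<subseteq> U \<and> card Z = 4 \<and> Z \<inter> C = {} \<and> Z \<inter> A \<noteq> {} \<and> X \<inter> Z = {} \<and> card (Z \<inter> A) = i}
      = {Z. Z \<subseteq> (A - C) \<union> W \<and> card (Z \<inter> (A - C)) = i \<and> card (Z \<inter> W) = 4 - i}"
  proof (intro set_eqI iffI)
    fix Z assume "Z \<in> {Z. Z \<subseteq> U \<and> card Z = 4 \<and> Z \<inter> C = {} \<and> Z \<inter> A \<noteq> {} \<and> X \<inter> Z = {} \<and> card (Z \<inter> A) = i}"
    then have z: "Z \<subseteq> U" "card Z = 4" "Z \<inter> C = {}" "X \<inter> Z = {}" "card (Z \<inter> A) = i" by auto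
    have fZ: "finite Z" using z(1) fU finite_subset by blast
    have s: "Z \<subseteq> (A - C) \<union> W" using z W_def by auto
    have a: "Z \<inter> (A - C) = Z \<inter> A" using z by auto
    have u: "Z = (Z \<inter> (A - C)) \<union> (Z \<inter> W)" using s by auto
    have "card Z = card (Z \<inter> (A - C)) + card (Z \<inter> W)"
      by (subst u, rule card_Un_disjoint) (use fZ dW in auto)
    then have "card (Z \<inter> W) = 4 - i" using z a by simp
    then show "Z \<in> {Z. Z \<subseteq> (A - C) \<union> W \<and> card (Z \<inter> (A - C)) = i \<and> card (Z \<inter> W) = 4 - i}"
      using s a z by simp
  next
    fix Z assume "Z \<in> {Z. Z \<subseteq> (A - C) \<union> W \<and> card (Z \<inter> (A - C)) = i \<and> card (Z \<inter> W) = 4 - i}"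
    then have z: "Z \<subseteq> (A - C) \<union> W" "card (Z \<inter> (A - C)) = i" "card (Z \<inter> W) = 4 - i" by auto
    have fZ: "finite Z" using z(1) fAC fW finite_subset by blast
    have u: "Z = (Z \<inter> (A - C)) \<union> (Z \<inter> W)" using z by auto
    have "card Z = card (Z \<inter> (A - C)) + card (Z \<inter> W)"
      by (subst u, rule card_Un_disjoint) (use fZ dW in auto)
    then have c4: "card Z = 4" using z i4 by simp
    have a: "Z \<inter> (A - C) = Z \<inter> A" using z W_def by auto
    have "Z \<inter> A \<noteq> {}" using a z i1 by (metis card.empty not_one_le_zero)
    moreover have "Z \<subseteq> U" using z AU W_def by auto
    moreover have "Z \<inter> C = {}" "X \<inter> Z = {}" using z W_def XA by auto
    ultimately show "Z \<in> {Z. Z \<subseteq> U \<and> card Z = 4 \<and> Z \<inter> C = {} \<and> Z \<inter> A \<noteq> {} \<and> X \<inter> Z = {} \<and> card (Z \<inter> A) = i}"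
      using c4 a z by simp
  qed
  have cW: "card W = card U - card (A \<union> C) - (4 - i)"
  proof -
    have "A \<union> C \<union> X = (A \<union> C) \<union> (X - C)" using XA by auto
    moreover have "card ((A \<union> C) \<union> (X - C)) = card (A \<union> C) + card (X - C)"
      by (rule card_Un_disjoint) (use fA fC fX XA in auto)
    moreover have "card (X - C) = 4 - i" using card_Diff_subset_Int[of X C] fX cX i
      by (simp add: Int_commute)
    moreover have "card W = card U - card (A \<union> C \<union> X)" unfolding W_def
      using AU CU XU fU by (intro card_Diff_subset) (auto intro: finite_subset)
    ultimately show ?thesis by simp
  qed
  show ?thesis unfolding eq count_split[OF fAC fW dW] cW ..
qed

lemma strict_witness:
  fixes Y :: "'a::linorder set"
  assumes fY: "finite Y" and cY: "card Y = m" and m: "9 \<le> m"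
  and AY: "A \<subseteq> Y" and cA: "card A = 4" and QY: "Q \<subseteq> Y" and QA: "Q \<inter> A = {}"
  and cQ: "card Q \<le> 3"
  and AF: "A \<in> F" and inter: "\<And>G H. G \<in> F \<Longrightarrow> H \<in> F \<Longrightarrow> G \<inter> H \<noteq> {}"
  and FQ: "\<And>G. G \<in> F \<Longrightarrow> G \<noteq> A \<Longrightarrow> G \<inter> Q \<noteq> {}"
  shows "\<exists>\<sigma>\<in>bijs Y m. cnt F m \<sigma> \<le> 3"
proof -
  have FA: "G \<inter> A \<noteq> {}" if "G \<in> F" for G using inter[OF that AF] .
  have fA: "finite A" and fQ: "finite Q" using fY AY QY finite_subset by auto
  have cYAQ: "card (Y - A - Q) = m - 4 - card Q"
  proof -
    have "card (Y - (A \<union> Q)) = card Y - card (A \<union> Q)" using fY AY QY by (intro card_Diff_subset) (auto intro: finite_subset)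
    moreover have "card (A \<union> Q) = 4 + card Q" using card_Un_disjoint[OF fA fQ] QA cA by (simp add: Int_commute)
    moreover have "Y - A - Q = Y - (A \<union> Q)" by auto
    ultimately show ?thesis using cY by simp
  qed
  then have "card (Y - A - Q) > 0" using cQ m by simp
  then obtain r where r: "r \<in> Y - A - Q" by (metis card_gt_0_iff ex_in_conv)
  define as where "as = sorted_list_of_set A"
  define qs where "qs = sorted_list_of_set Q"
  define rs where "rs = sorted_list_of_set (Y - A - Q - {r})"
  define L where "L = as @ [r] @ qs @ rs"
  have fR: "finite (Y - A - Q - {r})" using fY by simp
  have las: "length as = 4" using cA as_def by simp
  have lqs: "length qs = card Q" using qs_def by simp
  have lrs: "length rs = m - 5 - card Q" using rs_def cYAQ r fR by (simp add: card_Diff_singleton)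
  have sas: "set as = A" using as_def fA by simp
  have sqs: "set qs = Q" using qs_def fQ by simp
  have srs: "set rs = Y - A - Q - {r}" using rs_def fR by simp
  have lL: "length L = m" using las lqs lrs cQ m unfolding L_def by simp
  have dL: "distinct L" unfolding L_def using sas sqs srs r QA
    by (auto simp: as_def qs_def rs_def)
  have sL: "set L = Y" unfolding L_def using sas sqs srs r AY QY by auto
  define \<sigma> where "\<sigma> = restrict (\<lambda>i. L ! i) {..<m}"
  have bn: "bij_betw (\<lambda>i. L ! i) {..<m} Y" using bij_betw_nth[OF dL] lL sL by simp
  have bs: "bij_betw \<sigma> {..<m} Y" unfolding \<sigma>_def using bn
    by (rule bij_betw_cong[THEN iffD1, rotated]) simp
  have sB: "\<sigma> \<in> bijs Y m" unfolding bijs_def \<sigma>_def using bn bij_betwE[OF bn] by (auto simp: PiE_def)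
  have inj: "inj_on \<sigma> {..<m}" using bs bij_betw_def by blast
  have posA: "k < 4" if "k < m" "\<sigma> k \<in> A" for k
  proof (rule ccontr)
    assume k4: "\<not> k < 4"
    have e1: "L ! k = ([r] @ qs @ rs) ! (k - 4)" using k4 las unfolding L_def by (simp add: nth_append)
    have "k - 4 < length ([r] @ qs @ rs)" using that k4 lL las unfolding L_def by simp
    then have "L ! k \<in> set ([r] @ qs @ rs)" unfolding e1 by (rule nth_mem)
    moreover have "\<sigma> k = L ! k" using that \<sigma>_def by simp
    ultimately show False using that sqs srs r QA by auto
  qed
  have posQ: "5 \<le> k \<and> k \<le> 7" if "k < m" "\<sigma> k \<in> Q" for k
  proof -
    have sk: "\<sigma> k = L ! k" using that \<sigma>_def by simp
    have "\<not> k < 4"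
    proof
      assume "k < 4" then have "L ! k \<in> A" using las sas unfolding L_def by (auto simp: nth_append)
      then show False using that sk QA by auto
    qed
    moreover have "k \<noteq> 4"
    proof
      assume "k = 4" then have "L ! k = r" using las unfolding L_def by (simp add: nth_append)
      then show False using that sk r by auto
    qed
    moreover have "k < 5 + card Q"
    proof (rule ccontr)
      assume a: "\<not> k < 5 + card Q"
      have "L ! k = (qs @ rs) ! (k - 5)" using a las unfolding L_def by (simp add: nth_append)
      also have "\<dots> = rs ! (k - 5 - length qs)"
      proof -
        have nk: "\<not> (k - 5 < length qs)" using a lqs by simp
        show ?thesis unfolding nth_append using nk by (rule if_not_P)
      qed
      finally have "L ! k = rs ! (k - 5 - card Q)" using lqs by simp
      moreover have "k - 5 - card Q < length rs" using a that lL lrs las lqs unfolding L_def by simp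
      ultimately have "L ! k \<in> set rs" by simp
      then show False using that sk srs by auto
    qed
    ultimately show ?thesis using cQ by simp
  qed
  define J where "J = {i \<in> {..<m}. \<sigma> ` arc m i \<in> F}"
  have m0: "0 < m" using m by simp
  have cand: "i = 0 \<or> (close m 0 i \<and> 2 \<le> i \<and> i \<le> 7)" if iJ: "i \<in> J" for i
  proof -
    have im: "i < m" using iJ J_def by simp
    have GF: "\<sigma> ` arc m i \<in> F" using iJ J_def by simp
    have sub: "arc m i \<subseteq> {..<m}" using arc_subset[OF m0] .
    have "\<sigma> ` arc m i \<inter> A \<noteq> {}" using FA[OF GF] .
    then obtain k where k: "k \<in> arc m i" "\<sigma> k \<in> A" by blast
    have "k < 4" using posA k sub by auto
    then have "k \<in> arc m 0" unfolding arc_mem using m by (intro exI[of _ k]) simp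
    then have cl: "close m 0 i" using arc_inter_iff[of m 0 i] k m im by auto
    show ?thesis
    proof (cases "\<sigma> ` arc m i = A")
      case True
      have all: "\<forall>k\<in>arc m i. k < 4" using True posA sub by auto
      have "i \<in> arc m i" unfolding arc_mem using im by (intro exI[of _ 0]) simp
      then have i4: "i < 4" using all by simp
      have "(i + 3) mod m \<in> arc m i" unfolding arc_mem by (intro exI[of _ 3]) simp
      then have "(i + 3) mod m < 4" using all by simp
      moreover have "i + 3 < m" using i4 m by simp
      ultimately show ?thesis by simp
    next
      case False
      have "\<sigma> ` arc m i \<inter> Q \<noteq> {}" using FQ[OF GF False] .
      then obtain k where k: "k \<in> arc m i" "\<sigma> k \<in> Q" by blast
      have k57: "5 \<le> k \<and> k \<le> 7" using posQ k sub by auto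
      obtain r where r: "r < 4" "k = (i + r) mod m" using k unfolding arc_mem by blast
      have "i + r < 2 * m" using r im m by simp
      then have "k = (if i + r < m then i + r else i + r - m)" using r mod_lt2 by simp
      then have "2 \<le> i \<and> i \<le> 7" using k57 r im m by (auto split: if_splits)
      then show ?thesis using cl by simp
    qed
  qed
  have pc: "close m i j" if i: "i \<in> J" and j: "j \<in> J" for i j
  proof -
    have im: "i < m" and jm: "j < m" using i j J_def by auto
    have "\<sigma> ` arc m i \<inter> \<sigma> ` arc m j \<noteq> {}" using inter i j J_def by auto
    then obtain a b where a: "a \<in> arc m i" and b: "b \<in> arc m j" and e: "\<sigma> a = \<sigma> b" by blast
    have "a < m" "b < m" using a b arc_subset[of m] m by auto
    then have "a = b" using inj e by (auto dest: inj_onD)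
    then have "arc m i \<inter> arc m j \<noteq> {}" using a b by blast
    then show ?thesis using arc_inter_iff[of m i j] im jm m by simp
  qed
  have JJ: "J \<subseteq> {0,2,3} \<or> J \<subseteq> {0,3,6} \<or> J \<subseteq> {0,6,7}"
  proof (cases "2 \<in> J")
    case True
    have "j \<in> {0,2,3}" if "j \<in> J" for j
      using cand[OF that] pc[OF True that] m unfolding close_def by auto
    then show ?thesis by blast
  next
    case n2: False
    show ?thesis
    proof (cases "3 \<in> J")
      case True
      have "j \<in> {0,3,6}" if "j \<in> J" for j
      proof -
        have "j \<noteq> 2" using n2 that by auto
        then show ?thesis using cand[OF that] pc[OF True that] m unfolding close_def by auto
      qed
      then show ?thesis by blast
    next
      case False
      have "j \<in> {0,6,7}" if "j \<in> J" for j
      proof -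
        have "j \<noteq> 2" "j \<noteq> 3" using n2 False that by auto
        then show ?thesis using cand[OF that] m unfolding close_def by auto
      qed
      then show ?thesis by blast
    qed
  qed
  have "card J \<le> 3"
  proof -
    have c3: "card {0::nat,2,3} = 3" "card {0::nat,3,6} = 3" "card {0::nat,6,7} = 3" by simp_all
    show ?thesis using JJ card_mono[of "{0::nat,2,3}" J] card_mono[of "{0::nat,3,6}" J] card_mono[of "{0::nat,6,7}" J] c3
      by fastforce
  qed
  then show ?thesis using sB unfolding cnt_def J_def by blast
qed

lemma card_Diff_sym4:
  assumes "finite A" "finite C" "card A = 4" "card C = 4"
  shows "card (A - C) = card (C - A)"
  using assms card_Diff_subset_Int[of A C] card_Diff_subset_Int[of C A]
  by (simp add: Int_commute)

lemma boundary_bound: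
  fixes n :: nat
  defines "V \<equiv> kneser_vertices n 4"
  assumes n: "13 \<le> n"
  and AK: "A \<in> K" and KV: "K \<subseteq> V" and CV: "C \<in> V" and AC: "A \<inter> C \<noteq> {}"
  and SV: "S \<subseteq> V" and KS: "K \<inter> S = {}"
  and h1: "\<And>X. X \<in> V \<Longrightarrow> X \<inter> A = {} \<Longrightarrow> X \<in> K \<union> S"
  and h2: "\<And>Z. Z \<in> K \<Longrightarrow> Z \<inter> C \<noteq> {}"
  and h3: "\<And>X. X \<in> V \<Longrightarrow> X \<inter> A = {} \<Longrightarrow> X \<inter> C = {} \<Longrightarrow> X \<in> S"
  and h4: "\<And>X Z. X \<in> K \<Longrightarrow> Z \<in> V \<Longrightarrow> X \<inter> Z = {} \<Longrightarrow> Z \<in> K \<union> S"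
  shows "(n - 4) choose 4 \<le> card {D \<in> S. \<exists>X\<in>K. X \<inter> D = {}}"
proof -
  define U where "U = {1..n}"
  have fU: "finite U" and cU: "card U = n" using U_def by auto
  have Vdef: "V = {X. X \<subseteq> U \<and> card X = 4}" unfolding V_def kneser_vertices_def U_def by simp
  have AV: "A \<in> V" using AK KV by auto
  have AU: "A \<subseteq> U" and cA: "card A = 4" using AV Vdef by auto
  have CU: "C \<subseteq> U" and cC: "card C = 4" using CV Vdef by auto
  have fA: "finite A" and fC: "finite C" using AU CU fU finite_subset by auto
  have fV: "finite V" unfolding Vdef using fU by (auto intro: finite_subset[of _ "Pow U"])
  have fS: "finite S" using SV fV finite_subset by auto
  define P where "P = {X\<in>V. X \<inter> A = {} \<and> X \<inter> C = {}}"
  define Aonly where "Aonly = {X\<in>V. X \<inter> A = {} \<and> X \<inter> C \<noteq> {}}"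
  define Conly where "Conly = {Z\<in>V. Z \<inter> C = {} \<and> Z \<inter> A \<noteq> {}}"
  define Xs where "Xs = Aonly \<inter> K"
  define R where "R X Z \<longleftrightarrow> X \<inter> Z = {} \<and> card (X \<inter> C) = card (Z \<inter> A)" for X Z :: "nat set"
  define Bd where "Bd = {D \<in> S. \<exists>X\<in>K. X \<inter> D = {}}"
  define NB where "NB = {Z\<in>Conly. \<exists>X\<in>Xs. R X Z}"
  have fAonly: "finite Aonly" and fConly: "finite Conly" and fP: "finite P"
    using fV unfolding Aonly_def Conly_def P_def by auto
  have cAC: "card (A \<union> C) \<le> 7"
  proof -
    have "card (A \<inter> C) \<ge> 1" using AC fA by (simp add: Suc_leI card_gt_0_iff)
    moreover have "card (A \<union> C) + card (A \<inter> C) = card A + card C" using card_Un_Int[OF fA fC] by simp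
    ultimately show ?thesis using cA cC by simp
  qed
  have dsym: "card (A - C) = card (C - A)" using card_Diff_sym4[OF fA fC cA cC] .
  have degX: "card {Z'\<in>Conly. R X Z'} = (card (A - C) choose card (X \<inter> C)) *
      ((n - card (A \<union> C) - (4 - card (X \<inter> C))) choose (4 - card (X \<inter> C)))" if X: "X \<in> Aonly" for X
  proof -
    have X': "X \<subseteq> U" "card X = 4" "X \<inter> A = {}" "X \<inter> C \<noteq> {}" using X unfolding Aonly_def Vdef by auto
    have fX: "finite X" using X' fU finite_subset by auto
    have i1: "1 \<le> card (X \<inter> C)" using X'(4) fX by (simp add: Suc_leI card_gt_0_iff)
    have "{Z'\<in>Conly. R X Z'} = {Z. Z \<subseteq> U \<and> card Z = 4 \<and> Z \<inter> C = {} \<and> Z \<inter> A \<noteq> {} \<and> X \<inter> Z = {} \<and> card (Z \<inter> A) = card (X \<inter> C)}"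
      unfolding Conly_def Vdef R_def by auto
    then show ?thesis using deg_count[OF fU AU CU X'(1) X'(2) X'(3) HOL.refl i1] cU by simp
  qed
  have degZ: "card {X'\<in>Aonly. R X' Z} = (card (A - C) choose card (Z \<inter> A)) *
      ((n - card (A \<union> C) - (4 - card (Z \<inter> A))) choose (4 - card (Z \<inter> A)))" if Z: "Z \<in> Conly" for Z
  proof -
    have Z': "Z \<subseteq> U" "card Z = 4" "Z \<inter> C = {}" "Z \<inter> A \<noteq> {}" using Z unfolding Conly_def Vdef by auto
    have fZ: "finite Z" using Z' fU finite_subset by auto
    have i1: "1 \<le> card (Z \<inter> A)" using Z'(4) fZ by (simp add: Suc_leI card_gt_0_iff)
    have "{X'\<in>Aonly. R X' Z} = {X. X \<subseteq> U \<and> card X = 4 \<and> X \<inter> A = {} \<and> X \<inter> C \<noteq> {} \<and> Z \<inter> X = {} \<and> card (X \<inter> C) = card (Z \<inter> A)}"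
      unfolding Aonly_def Vdef R_def by auto
    then show ?thesis using deg_count[OF fU CU AU Z'(1) Z'(2) Z'(3) HOL.refl i1] cU dsym
      by (simp add: Un_commute)
  qed
  have hall: "card Xs \<le> card NB" unfolding NB_def
  proof (rule weighted_hall[OF fAonly fConly])
    show "Xs \<subseteq> Aonly" unfolding Xs_def by auto
  next
    fix X Z assume X: "X \<in> Aonly" and Z: "Z \<in> Conly" and r: "R X Z"
    have e: "card (X \<inter> C) = card (Z \<inter> A)" using r R_def by simp
    show "card {y' \<in> Conly. R X y'} = card {x' \<in> Aonly. R x' Z}"
      unfolding degX[OF X] degZ[OF Z] e ..
  next
    fix X assume X: "X \<in> Xs"
    then have XA: "X \<in> Aonly" unfolding Xs_def by simp
    have X': "X \<subseteq> U" "card X = 4" "X \<inter> A = {}" "X \<inter> C \<noteq> {}" using XA unfolding Aonly_def Vdef by auto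
    have fX: "finite X" using X' fU finite_subset by auto
    have i1: "1 \<le> card (X \<inter> C)" using X'(4) fX by (simp add: Suc_leI card_gt_0_iff)
    have "X \<inter> C \<subseteq> C - A" using X' by auto
    then have "card (X \<inter> C) \<le> card (A - C)" using dsym card_mono[of "C - A"] fC by simp
    then have p1: "0 < card (A - C) choose card (X \<inter> C)" by simp
    have "card (X \<inter> C) \<le> 4" using card_mono[OF fX, of "X \<inter> C"] X' by simp
    then have "4 - card (X \<inter> C) \<le> n - card (A \<union> C) - (4 - card (X \<inter> C))" using n cAC i1 by simp
    then have p2: "0 < (n - card (A \<union> C) - (4 - card (X \<inter> C))) choose (4 - card (X \<inter> C))" by simp
    have "card {Z'\<in>Conly. R X Z'} > 0" using degX[OF XA] p1 p2 by simp
    then show "\<exists>y\<in>Conly. R X y" by (metis (no_types, lifting) card.empty less_irrefl empty_Collect_eq)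
  qed
  have PB: "P \<subseteq> Bd" unfolding P_def Bd_def using h3 AK by auto
  have AB: "Aonly \<inter> S \<subseteq> Bd" unfolding Aonly_def Bd_def using AK by auto
  have NBB: "NB \<subseteq> Bd"
  proof
    fix Z assume "Z \<in> NB"
    then obtain X where Z: "Z \<in> Conly" and X: "X \<in> Xs" and r: "R X Z" unfolding NB_def by auto
    have XK: "X \<in> K" using X Xs_def by simp
    have ZV: "Z \<in> V" and ZC: "Z \<inter> C = {}" using Z Conly_def by auto
    have XZ: "X \<inter> Z = {}" using r R_def by simp
    have "Z \<in> K \<union> S" using h4[OF XK ZV XZ] .
    moreover have "Z \<notin> K" using h2 ZC by blast
    ultimately have "Z \<in> S" by simp
    then show "Z \<in> Bd" unfolding Bd_def using XK XZ by blast
  qed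
  have fBd: "finite Bd" using fS Bd_def by simp
  have d1: "P \<inter> (Aonly \<inter> S) = {}" unfolding P_def Aonly_def by auto
  have d2: "(P \<union> (Aonly \<inter> S)) \<inter> NB = {}" unfolding P_def Aonly_def NB_def Conly_def by auto
  have "card P + card (Aonly \<inter> S) + card NB = card (P \<union> (Aonly \<inter> S) \<union> NB)"
    using fP fAonly fConly d1 d2 NB_def by (simp add: card_Un_disjoint)
  also have "\<dots> \<le> card Bd" using PB AB NBB fBd by (intro card_mono) auto
  finally have c1: "card P + card (Aonly \<inter> S) + card NB \<le> card Bd" .
  have split: "Aonly = (Aonly \<inter> S) \<union> Xs" unfolding Xs_def using h1 Aonly_def by auto
  have "card Aonly = card (Aonly \<inter> S) + card Xs"
    using split KS fAonly Xs_def by (metis card_Un_disjoint finite_Int inf_commute inf_left_commute inf_sup_absorb inf_bot_right)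
  then have c2: "card P + card Aonly \<le> card Bd" using c1 hall by simp
  have NA: "{X\<in>V. X \<inter> A = {}} = P \<union> Aonly" unfolding P_def Aonly_def by auto
  have "card {X\<in>V. X \<inter> A = {}} = card P + card Aonly"
    unfolding NA by (rule card_Un_disjoint[OF fP fAonly]) (auto simp: P_def Aonly_def)
  moreover have "{X\<in>V. X \<inter> A = {}} = {X. X \<subseteq> U - A \<and> card X = 4}" unfolding Vdef by auto
  moreover have "card (U - A) = n - 4" using cU cA AU fU by (simp add: card_Diff_subset fA)
  ultimately have "card P + card Aonly = (n - 4) choose 4" using n_subsets[of "U - A" 4] fU by simp
  then show ?thesis using c2 Bd_def by simp
qed

lemma kV_def: "kneser_vertices n 4 = {X. X \<subseteq> {1..n} \<and> card X = 4}"
  unfolding kneser_vertices_def by simp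

lemma finite_kV: "finite (kneser_vertices n k)"
  unfolding kneser_vertices_def by (rule finite_subset[of _ "Pow {1..n}"]) auto

lemma kV_ne: "X \<in> kneser_vertices n 4 \<Longrightarrow> X \<noteq> {}"
  unfolding kneser_vertices_def by auto

lemma ksym: "\<And>a b. kneser_adj a b \<Longrightarrow> kneser_adj b a"
  by (rule kneser_adj_sym)

lemma kcomp_disjoint:
  assumes "K1 \<in> components_in W kneser_adj" "K2 \<in> components_in W kneser_adj" "x \<in> K1" "x \<in> K2"
  shows "K1 = K2"
  using comp_disjoint[where E=kneser_adj, OF ksym assms] .

lemma kcomp_no_edge:
  assumes "K1 \<in> components_in W kneser_adj" "K2 \<in> components_in W kneser_adj" "x \<in> K1" "y \<in> K2" "K1 \<noteq> K2"
  shows "\<not> kneser_adj x y"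
  using comp_no_edge[where E=kneser_adj, OF ksym assms] .

lemma kcomp_closed:
  assumes "K \<in> components_in W kneser_adj" "x \<in> K" "y \<in> W" "kneser_adj x y"
  shows "y \<in> K"
  using comp_closed[where E=kneser_adj, OF ksym assms] .

lemma kcomp_eq:
  assumes "K \<in> components_in W kneser_adj" "y \<in> K"
  shows "K = comp_of W kneser_adj y"
  using comp_eq[where E=kneser_adj, OF ksym assms] .

text \<open>EKR applied to representatives of components touching D.\<close>
lemma tau_family:
  fixes n :: nat and S :: "nat set set"
  defines "V \<equiv> kneser_vertices n 4"
  defines "KK \<equiv> components_in (V - S) kneser_adj"
  assumes D: "D \<in> V"
  and rep: "\<And>K. K \<in> KD \<Longrightarrow> rep K \<in> K \<and> rep K \<inter> D = {}"
  and KD: "KD \<subseteq> KK"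
  shows "card (rep ` KD) = card KD"
    and "rep ` KD \<subseteq> {A. A \<subseteq> {1..n} - D \<and> card A = 4}"
    and "\<And>G H. G \<in> rep ` KD \<Longrightarrow> H \<in> rep ` KD \<Longrightarrow> G \<inter> H \<noteq> {}"
proof -
  have inj: "inj_on rep KD"
  proof
    fix K1 K2 assume K1: "K1 \<in> KD" and K2: "K2 \<in> KD" and e: "rep K1 = rep K2"
    have "rep K1 \<in> K1" using rep[OF K1] by simp
    moreover have "rep K1 \<in> K2" using rep[OF K2] e by simp
    moreover have "K1 \<in> components_in (V - S) kneser_adj" "K2 \<in> components_in (V - S) kneser_adj"
      using K1 K2 KD KK_def by auto
    ultimately show "K1 = K2" using kcomp_disjoint by blast
  qed
  then show "card (rep ` KD) = card KD" by (simp add: card_image)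
  show "rep ` KD \<subseteq> {A. A \<subseteq> {1..n} - D \<and> card A = 4}"
  proof
    fix G assume "G \<in> rep ` KD"
    then obtain K where K: "K \<in> KD" and G: "G = rep K" by blast
    have "G \<in> K" "G \<inter> D = {}" using rep[OF K] G by auto
    moreover have "K \<in> components_in (V - S) kneser_adj" using K KD KK_def by auto
    then have "K \<subseteq> V - S" by (rule comp_subset)
    ultimately show "G \<in> {A. A \<subseteq> {1..n} - D \<and> card A = 4}" unfolding V_def kV_def by auto
  qed
  fix G H assume G: "G \<in> rep ` KD" and H: "H \<in> rep ` KD"
  then obtain K1 K2 where K1: "K1 \<in> KD" "G = rep K1" and K2: "K2 \<in> KD" "H = rep K2" by blast
  have GK: "G \<in> K1" and HK: "H \<in> K2" using rep K1 K2 by auto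
  have "K1 \<in> components_in (V - S) kneser_adj" using K1 KD KK_def by auto
  then have "K1 \<subseteq> V - S" by (rule comp_subset)
  then have GV: "G \<in> V" using GK by auto
  show "G \<inter> H \<noteq> {}"
  proof (cases "K1 = K2")
    case True
    then have "G = H" using K1 K2 by simp
    then show ?thesis using kV_ne GV V_def by auto
  next
    case False
    have "K1 \<in> components_in (V - S) kneser_adj" "K2 \<in> components_in (V - S) kneser_adj"
      using K1 K2 KD KK_def by auto
    then have "\<not> kneser_adj G H"
      using kcomp_no_edge[OF _ _ GK HK False] by blast
    then show ?thesis unfolding kneser_adj_def .
  qed
qed

lemma card_Y:
  assumes "D \<in> kneser_vertices n 4"
  shows "card ({1..n} - D) = n - 4" and "finite ({1..n} - D)"
  using assms unfolding kV_def by (auto simp: card_Diff_subset finite_subset)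

lemma reach_last:
  assumes "reach_in W E x z" "x \<noteq> z"
  shows "\<exists>y. reach_in W E x y \<and> z \<in> W \<and> E y z"
  using assms by (cases rule: reach_in.cases) auto

lemma comp_has_edge:
  assumes K: "K \<in> components_in W kneser_adj" and fK: "finite K" and cK: "card K \<noteq> 1"
  shows "\<exists>A\<in>K. \<exists>X\<in>K. A \<inter> X = {}"
proof -
  have "K \<noteq> {}" using comp_nonempty[OF K] .
  then obtain a where a: "a \<in> K" by blast
  have "K \<noteq> {a}" using cK by auto
  then obtain b where b: "b \<in> K" "b \<noteq> a" using a by blast
  have Ka: "K = comp_of W kneser_adj a" using kcomp_eq[OF K a] .
  then have "reach_in W kneser_adj a b" using b unfolding comp_of_def by simp
  then obtain y where y: "reach_in W kneser_adj a y" "b \<in> W" "kneser_adj y b"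
    using reach_last b by metis
  have "y \<in> K" using y(1) Ka unfolding comp_of_def by simp
  then show ?thesis using b y(3) unfolding kneser_adj_def by blast
qed

lemma rep_exists:
  assumes "\<exists>X\<in>K. X \<inter> D = {}"
  shows "(SOME X. X \<in> K \<and> X \<inter> D = {}) \<in> K \<and> (SOME X. X \<in> K \<and> X \<inter> D = {}) \<inter> D = {}"
  using assms by (metis (mono_tags, lifting) someI_ex)

lemma tau_bound:
  fixes n :: nat and S :: "nat set set"
  defines "V \<equiv> kneser_vertices n 4"
  defines "KK \<equiv> components_in (V - S) kneser_adj"
  assumes n: "13 \<le> n" and D: "D \<in> V"
  shows "card {K\<in>KK. \<exists>X\<in>K. X \<inter> D = {}} * (n - 4) \<le> 4 * ((n - 4) choose 4)"
proof -
  define KD where "KD = {K\<in>KK. \<exists>X\<in>K. X \<inter> D = {}}"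
  define rep where "rep K = (SOME X. X \<in> K \<and> X \<inter> D = {})" for K
  have rep: "rep K \<in> K \<and> rep K \<inter> D = {}" if "K \<in> KD" for K
    using rep_exists[of K D] that unfolding KD_def rep_def by simp
  have KD: "KD \<subseteq> KK" unfolding KD_def by auto
  note tf = tau_family[where D=D and n=n and rep=rep and KD=KD and S=S, OF D[unfolded V_def] rep KD[unfolded KK_def V_def]]
  have "card (rep ` KD) * (n - 4) \<le> 4 * ((n - 4) choose 4)"
    by (rule ekr_general(1)[OF card_Y(2)[OF D[unfolded V_def]] card_Y(1)[OF D[unfolded V_def]] _ tf(2) tf(3)])
      (use n in auto)
  then show ?thesis using tf(1) KD_def by simp
qed

lemma comp_boundary:
  fixes n :: nat and S :: "nat set set"
  defines "V \<equiv> kneser_vertices n 4"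
  defines "KK \<equiv> components_in (V - S) kneser_adj"
  assumes n: "13 \<le> n" and SV: "S \<subseteq> V" and K: "K \<in> KK" and K': "K' \<in> KK" and KK': "K \<noteq> K'"
  shows "(n - 4) choose 4 \<le> card {D \<in> S. \<exists>X\<in>K. X \<inter> D = {}}"
proof -
  have Kc: "K \<in> components_in (V - S) kneser_adj" and K'c: "K' \<in> components_in (V - S) kneser_adj"
    using K K' KK_def by auto
  obtain A where A: "A \<in> K" using comp_nonempty[OF Kc] by blast
  obtain C where C: "C \<in> K'" using comp_nonempty[OF K'c] by blast
  have KU: "K \<subseteq> V - S" using comp_subset[OF Kc] .
  have K'U: "K' \<subseteq> V - S" using comp_subset[OF K'c] .
  have CV: "C \<in> V" using C K'U by auto
  have noadj: "\<not> kneser_adj Z W" if "Z \<in> K" "W \<in> K'" for Z W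
    using kcomp_no_edge[OF Kc K'c that KK'] .
  have AC: "A \<inter> C \<noteq> {}" using noadj[OF A C] unfolding kneser_adj_def .
  show ?thesis
    unfolding V_def
  proof (rule boundary_bound[OF n A])
    show "K \<subseteq> kneser_vertices n 4" using KU V_def by auto
    show "C \<in> kneser_vertices n 4" using CV V_def by simp
    show "A \<inter> C \<noteq> {}" by (rule AC)
    show "S \<subseteq> kneser_vertices n 4" using SV V_def by simp
    show "K \<inter> S = {}" using KU by auto
  next
    fix X assume X: "X \<in> kneser_vertices n 4" "X \<inter> A = {}"
    show "X \<in> K \<union> S"
    proof (cases "X \<in> S")
      case False
      then have "X \<in> V - S" using X V_def by simp
      moreover have "kneser_adj A X" using X unfolding kneser_adj_def by auto
      ultimately have "X \<in> K" using kcomp_closed[OF Kc A] by blast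
      then show ?thesis by simp
    qed simp
  next
    fix Z assume "Z \<in> K"
    then show "Z \<inter> C \<noteq> {}" using noadj[OF _ C] unfolding kneser_adj_def by blast
  next
    fix X assume X: "X \<in> kneser_vertices n 4" "X \<inter> A = {}" "X \<inter> C = {}"
    show "X \<in> S"
    proof (rule ccontr)
      assume "X \<notin> S"
      then have XU: "X \<in> V - S" using X V_def by simp
      have "kneser_adj A X" "kneser_adj C X" using X unfolding kneser_adj_def by auto
      then have "X \<in> K" "X \<in> K'" using kcomp_closed[OF Kc A XU] kcomp_closed[OF K'c C XU] by auto
      then show False using kcomp_disjoint[OF Kc K'c] KK' by blast
    qed
  next
    fix X Z assume XK: "X \<in> K" and ZV: "Z \<in> kneser_vertices n 4" and XZ: "X \<inter> Z = {}"
    show "Z \<in> K \<union> S"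
    proof (cases "Z \<in> S")
      case False
      then have "Z \<in> V - S" using ZV V_def by simp
      moreover have "kneser_adj X Z" using XZ unfolding kneser_adj_def .
      ultimately have "Z \<in> K" using kcomp_closed[OF Kc XK] by blast
      then show ?thesis by simp
    qed simp
  qed
qed

lemma double_count:
  assumes fS: "finite S" and fK: "finite KK"
  shows "(\<Sum>D\<in>S. card {K\<in>KK. P D K}) = (\<Sum>K\<in>KK. card {D\<in>S. P D K})"
proof -
  have "(\<Sum>D\<in>S. card {K\<in>KK. P D K}) = (\<Sum>D\<in>S. \<Sum>K\<in>{K\<in>KK. P D K}. (1::nat))" by simp
  also have "\<dots> = (\<Sum>K\<in>KK. \<Sum>D | D \<in> S \<and> P D K. (1::nat))" by (rule sum.swap_restrict[OF fS fK])
  also have "\<dots> = (\<Sum>K\<in>KK. card {D\<in>S. P D K})" by simp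
  finally show ?thesis .
qed

lemma cut_sums:
  fixes n :: nat and S :: "nat set set"
  defines "V \<equiv> kneser_vertices n 4"
  defines "KK \<equiv> components_in (V - S) kneser_adj"
  assumes n: "13 \<le> n" and SV: "S \<subseteq> V" and c2: "2 \<le> card KK"
  shows "card KK * ((n - 4) choose 4) \<le> (\<Sum>D\<in>S. card {K\<in>KK. \<exists>X\<in>K. X \<inter> D = {}})"
proof -
  have fV: "finite V" unfolding V_def by (rule finite_kV)
  have fS: "finite S" using SV fV finite_subset by auto
  have fK: "finite KK" unfolding KK_def using fV by (simp add: finite_components)
  have bd: "(n - 4) choose 4 \<le> card {D \<in> S. \<exists>X\<in>K. X \<inter> D = {}}" if K: "K \<in> KK" for K
  proof -
    have "\<exists>K'\<in>KK. K' \<noteq> K"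
    proof (rule ccontr)
      assume "\<not> (\<exists>K'\<in>KK. K' \<noteq> K)"
      then have "KK \<subseteq> {K}" by auto
      then have "card KK \<le> 1" using card_mono[of "{K}" KK] by simp
      then show False using c2 by simp
    qed
    then obtain K' where "K' \<in> KK" "K \<noteq> K'" by metis
    then show ?thesis using comp_boundary[OF n SV[unfolded V_def] K[unfolded KK_def V_def]] by (simp add: KK_def V_def)
  qed
  have "card KK * ((n - 4) choose 4) = (\<Sum>K\<in>KK. (n - 4) choose 4)" by simp
  also have "\<dots> \<le> (\<Sum>K\<in>KK. card {D \<in> S. \<exists>X\<in>K. X \<inter> D = {}})" by (rule sum_mono) (rule bd)
  also have "\<dots> = (\<Sum>D\<in>S. card {K\<in>KK. \<exists>X\<in>K. X \<inter> D = {}})"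
    by (rule double_count[symmetric, OF fS fK])
  finally show ?thesis .
qed

lemma cut_bound:
  fixes n :: nat and S :: "nat set set"
  defines "V \<equiv> kneser_vertices n 4"
  defines "KK \<equiv> components_in (V - S) kneser_adj"
  assumes n: "13 \<le> n" and SV: "S \<subseteq> V" and c2: "2 \<le> card KK"
  shows "(n - 4) * card KK \<le> 4 * card S"
proof -
  define d where "d = (n - 4) choose 4"
  have dpos: "0 < d" unfolding d_def using n by simp
  have "card KK * d * (n - 4) \<le> (\<Sum>D\<in>S. card {K\<in>KK. \<exists>X\<in>K. X \<inter> D = {}}) * (n - 4)"
    using cut_sums[OF n SV[unfolded V_def] c2[unfolded KK_def V_def]] unfolding d_def KK_def V_def by simp
  also have "\<dots> = (\<Sum>D\<in>S. card {K\<in>KK. \<exists>X\<in>K. X \<inter> D = {}} * (n - 4))" by (simp add: sum_distrib_right)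
  also have "\<dots> \<le> (\<Sum>D\<in>S. 4 * d)"
  proof (rule sum_mono)
    fix D assume "D \<in> S"
    then have "D \<in> kneser_vertices n 4" using SV V_def by auto
    then show "card {K\<in>KK. \<exists>X\<in>K. X \<inter> D = {}} * (n - 4) \<le> 4 * d"
      using tau_bound[OF n, of D S] unfolding KK_def V_def d_def by simp
  qed
  also have "\<dots> = 4 * card S * d" by simp
  finally have "(n - 4) * card KK * d \<le> 4 * card S * d" by (simp add: algebra_simps)
  then show ?thesis using dpos by simp
qed

lemma strict_tau:
  fixes n :: nat and S :: "nat set set"
  defines "V \<equiv> kneser_vertices n 4"
  defines "KK \<equiv> components_in (V - S) kneser_adj"
  assumes n: "13 \<le> n" and SV: "S \<subseteq> V"
  and K: "K \<in> KK" and K': "K' \<in> KK" and KK': "K \<noteq> K'"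
  and A: "A \<in> K" and X: "X \<in> K" and AX: "A \<inter> X = {}" and C: "C \<in> K'"
  shows "\<exists>D\<in>S. card {K\<in>KK. \<exists>Z\<in>K. Z \<inter> D = {}} * (n - 4) < 4 * ((n - 4) choose 4)"
proof -
  define U where "U = {1..n::nat}"
  have fU: "finite U" and cU: "card U = n" using U_def by auto
  have Vd: "V = {X. X \<subseteq> U \<and> card X = 4}" unfolding V_def U_def kV_def ..
  have Kc: "K \<in> components_in (V - S) kneser_adj" and K'c: "K' \<in> components_in (V - S) kneser_adj"
    using K K' KK_def by auto
  have KU: "K \<subseteq> V - S" using comp_subset[OF Kc] .
  have K'U: "K' \<subseteq> V - S" using comp_subset[OF K'c] .
  have noadj: "\<not> kneser_adj Z W" if "Z \<in> K" "W \<in> K'" for Z W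
    using kcomp_no_edge[OF Kc K'c that KK'] .
  have AV: "A \<subseteq> U" "card A = 4" using A KU Vd by auto
  have XV: "X \<subseteq> U" "card X = 4" using X KU Vd by auto
  have CV: "C \<subseteq> U" "card C = 4" using C K'U Vd by auto
  have fA: "finite A" using AV(1) fU by (rule finite_subset)
  have fX: "finite X" using XV(1) fU by (rule finite_subset)
  have fC: "finite C" using CV(1) fU by (rule finite_subset)
  have AC: "A \<inter> C \<noteq> {}" using noadj[OF A C] unfolding kneser_adj_def .
  have XC: "X \<inter> C \<noteq> {}" using noadj[OF X C] unfolding kneser_adj_def .
  define Q where "Q = X \<inter> C"
  have cQ: "card Q \<le> 3"
  proof -
    have "card (C \<inter> A) \<ge> 1" using AC fC by (simp add: Suc_leI card_gt_0_iff Int_commute)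
    then have "card (C - A) \<le> 3" using card_Diff_subset_Int[of C A] fC CV by simp
    moreover have "Q \<subseteq> C - A" using AX Q_def by auto
    ultimately show ?thesis using card_mono[of "C - A" Q] fC by simp
  qed
  define av where "av = U - (A \<union> X \<union> C)"
  have cav: "card Q \<le> card av"
  proof -
    have c1: "card (A \<union> X) = 8" using card_Un_disjoint[OF fA fX AX] AV XV by simp
    have i2: "card (C \<inter> (A \<union> X)) \<ge> 2"
    proof -
      have "C \<inter> (A \<union> X) = (C \<inter> A) \<union> (C \<inter> X)" by auto
      moreover have "card ((C \<inter> A) \<union> (C \<inter> X)) = card (C \<inter> A) + card (C \<inter> X)"
        by (rule card_Un_disjoint) (use fC AX in auto)
      moreover have "card (C \<inter> A) \<ge> 1" "card (C \<inter> X) \<ge> 1" using AC XC fC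
        by (simp_all add: Suc_leI card_gt_0_iff Int_commute)
      ultimately show ?thesis by simp
    qed
    have c2: "card (C - (A \<union> X)) \<le> 2" using card_Diff_subset_Int[of C "A \<union> X"] fC CV i2 by simp
    have "A \<union> X \<union> C = (A \<union> X) \<union> (C - (A \<union> X))" by auto
    moreover have "card ((A \<union> X) \<union> (C - (A \<union> X))) = card (A \<union> X) + card (C - (A \<union> X))"
      by (rule card_Un_disjoint) (use fA fX fC in auto)
    ultimately have "card (A \<union> X \<union> C) \<le> 10" using c1 c2 by simp
    moreover have "card av = card U - card (A \<union> X \<union> C)" unfolding av_def
      using AV XV CV fU by (intro card_Diff_subset) (auto intro: finite_subset)
    ultimately show ?thesis using cU n cQ by simp
  qed
  obtain R where R: "R \<subseteq> av" "card R = card Q" using obtain_subset_with_card_n[OF cav] by metis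
  define D where "D = (X - C) \<union> R"
  have fR: "finite R" using R av_def fU finite_subset by auto
  have DU: "D \<subseteq> U" using R XV av_def D_def by auto
  have cD: "card D = 4"
  proof -
    have "card D = card (X - C) + card R" unfolding D_def
      by (rule card_Un_disjoint) (use fX fR R av_def in auto)
    moreover have "card (X - C) = 4 - card Q" using card_Diff_subset_Int[of X C] fX XV Q_def by simp
    moreover have "card Q \<le> 4" using cQ by simp
    ultimately show ?thesis using R by simp
  qed
  have DV: "D \<in> V" using DU cD Vd by simp
  have DA: "D \<inter> A = {}" using AX R av_def D_def by auto
  have DC: "D \<inter> C = {}" using R av_def D_def by auto
  have DS: "D \<in> S"
  proof (rule ccontr)
    assume "D \<notin> S"
    then have DU': "D \<in> V - S" using DV by simp
    have "kneser_adj A D" "kneser_adj C D" using DA DC unfolding kneser_adj_def by auto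
    then have "D \<in> K" "D \<in> K'" using kcomp_closed[OF Kc A DU'] kcomp_closed[OF K'c C DU'] by auto
    then show False using kcomp_disjoint[OF Kc K'c] KK' by blast
  qed
  have XD: "X \<inter> D = X - C" using R av_def D_def by auto
  define KD where "KD = {K''\<in>KK. \<exists>Z\<in>K''. Z \<inter> D = {}}"
  define rep where "rep K'' = (if K'' = K then A else (SOME Z. Z \<in> K'' \<and> Z \<inter> D = {}))" for K''
  have rep: "rep K'' \<in> K'' \<and> rep K'' \<inter> D = {}" if "K'' \<in> KD" for K''
  proof (cases "K'' = K")
    case True then show ?thesis using A DA rep_def by auto
  next
    case False then show ?thesis using rep_exists[of K'' D] that unfolding KD_def rep_def by simp
  qed
  have KDK: "KD \<subseteq> KK" unfolding KD_def by auto
  have KinKD: "K \<in> KD" using K A DA unfolding KD_def by auto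
  note tf = tau_family[where D=D and n=n and rep=rep and KD=KD and S=S, OF DV[unfolded V_def] rep KDK[unfolded KK_def V_def]]
  define Y where "Y = {1..n} - D"
  have fY: "finite Y" and cY: "card Y = n - 4" using card_Y[OF DV[unfolded V_def]] Y_def by auto
  have m9: "9 \<le> n - 4" using n by simp
  have AY: "A \<subseteq> Y" using AV DA Y_def U_def by auto
  have QY: "Q \<subseteq> Y" using XV DC Q_def Y_def U_def by auto
  have QA: "Q \<inter> A = {}" using AX Q_def by auto
  have AF: "A \<in> rep ` KD" using KinKD rep_def by force
  have FQ: "G \<inter> Q \<noteq> {}" if G: "G \<in> rep ` KD" and GA: "G \<noteq> A" for G
  proof -
    obtain K'' where K'': "K'' \<in> KD" "G = rep K''" using G by blast
    have ne: "K'' \<noteq> K" using K'' GA rep_def by auto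
    have GK: "G \<in> K''" and GD: "G \<inter> D = {}" using rep[OF K''(1)] K''(2) by auto
    have K''c: "K'' \<in> components_in (V - S) kneser_adj" using K'' KDK KK_def by auto
    have "\<not> kneser_adj G X" using kcomp_no_edge[OF K''c Kc GK X ne] .
    then obtain x where x: "x \<in> G" "x \<in> X" unfolding kneser_adj_def by blast
    have "x \<notin> D" using x GD by auto
    then have "x \<in> C" using x XD by auto
    then show ?thesis using x Q_def by auto
  qed
  have "\<exists>\<sigma>\<in>bijs Y (n - 4). cnt (rep ` KD) (n - 4) \<sigma> \<le> 3"
    by (rule strict_witness[OF fY cY m9 AY AV(2) QY QA cQ AF]) (use tf(3) FQ in auto)
  then have "card (rep ` KD) * (n - 4) < 4 * ((n - 4) choose 4)"
    using ekr_general(2)[OF fY cY _ _ tf(3)] tf(2) m9 Y_def by auto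
  then show ?thesis using DS tf(1) KD_def by auto
qed

lemma cut_equality:
  fixes n :: nat and S :: "nat set set"
  defines "V \<equiv> kneser_vertices n 4"
  defines "KK \<equiv> components_in (V - S) kneser_adj"
  assumes n: "13 \<le> n" and SV: "S \<subseteq> V" and c2: "2 \<le> card KK"
  and eq: "(n - 4) * card KK = 4 * card S"
  shows "\<forall>K\<in>KK. card K = 1"
proof -
  define d where "d = (n - 4) choose 4"
  define tau where "tau D = card {K\<in>KK. \<exists>X\<in>K. X \<inter> D = {}}" for D
  have fV: "finite V" unfolding V_def by (rule finite_kV)
  have fS: "finite S" using SV fV finite_subset by auto
  have tb: "tau D * (n - 4) \<le> 4 * d" if "D \<in> S" for D
  proof -
    have "D \<in> kneser_vertices n 4" using that SV V_def by auto
    then show ?thesis using tau_bound[OF n, of D S] unfolding tau_def KK_def V_def d_def by simp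
  qed
  have all: "\<not> tau D * (n - 4) < 4 * d" if D0: "D \<in> S" for D
  proof
    assume lt: "tau D * (n - 4) < 4 * d"
    have "(\<Sum>D\<in>S. tau D * (n - 4)) < (\<Sum>D\<in>S. 4 * d)"
    proof (rule sum_strict_mono_ex1[OF fS])
      show "\<forall>x\<in>S. tau x * (n - 4) \<le> 4 * d" using tb by blast
      show "\<exists>a\<in>S. tau a * (n - 4) < 4 * d" using lt D0 by blast
    qed
    moreover have "card KK * d \<le> (\<Sum>D\<in>S. tau D)"
      using cut_sums[OF n SV[unfolded V_def] c2[unfolded KK_def V_def]] unfolding tau_def d_def KK_def V_def by simp
    then have "card KK * d * (n - 4) \<le> (\<Sum>D\<in>S. tau D * (n - 4))"
      by (simp add: sum_distrib_right[symmetric])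
    moreover have "card KK * d * (n - 4) = (\<Sum>D\<in>S. 4 * d)"
    proof -
      have "card KK * d * (n - 4) = ((n - 4) * card KK) * d" by (simp add: algebra_simps)
      also have "\<dots> = (4 * card S) * d" using eq by simp
      also have "\<dots> = (\<Sum>D\<in>S. 4 * d)" by simp
      finally show ?thesis .
    qed
    ultimately show False by linarith
  qed
  show ?thesis
  proof
    fix K assume K: "K \<in> KK"
    show "card K = 1"
    proof (rule ccontr)
      assume c1: "card K \<noteq> 1"
      have Kc: "K \<in> components_in (V - S) kneser_adj" using K KK_def by simp
      have "K \<subseteq> V" using comp_subset[OF Kc] by auto
      then have fK: "finite K" using fV finite_subset by auto
      obtain A X where AX: "A \<in> K" "X \<in> K" "A \<inter> X = {}" using comp_has_edge[OF Kc fK c1] by blast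
      have "\<exists>K'\<in>KK. K' \<noteq> K"
      proof (rule ccontr)
        assume "\<not> (\<exists>K'\<in>KK. K' \<noteq> K)"
        then have "KK \<subseteq> {K}" by auto
        then have "card KK \<le> 1" using card_mono[of "{K}" KK] by simp
        then show False using c2 by simp
      qed
      then obtain K' where K': "K' \<in> KK" "K \<noteq> K'" by metis
      have K'c: "K' \<in> components_in (V - S) kneser_adj" using K' KK_def by simp
      obtain C where C: "C \<in> K'" using comp_nonempty[OF K'c] by blast
      obtain D where "D \<in> S" "tau D * (n - 4) < 4 * d"
        using strict_tau[OF n SV[unfolded V_def] Kc[unfolded V_def] K'c[unfolded V_def] K'(2) AX C]
        unfolding tau_def d_def KK_def V_def by blast
      then show False using all by blast
    qed
  qed
qed

lemma star_cut:
  fixes n :: nat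
  defines "V \<equiv> kneser_vertices n 4"
  defines "star \<equiv> {X\<in>V. (1::nat) \<in> X}"
  assumes n: "13 \<le> n"
  shows "vertex_cut V kneser_adj (V - star)"
    and "real (card (V - star)) / real (num_components (V - (V - star)) kneser_adj) = real n / 4 - 1"
proof -
  have fV: "finite V" unfolding V_def by (rule finite_kV)
  have sV: "star \<subseteq> V" unfolding star_def by auto
  have VV: "V - (V - star) = star" using sV by auto
  have reach: "y = x" if "reach_in star kneser_adj x y" for x y
    using that
  proof (induction rule: reach_in.induct)
    case (refl x) then show ?case by simp
  next
    case (step x y z)
    have "y \<in> star" using reach_in_mem[OF step.hyps(1)] by simp
    then have "1 \<in> y" "1 \<in> z" using step.hyps(2) star_def by auto
    then show ?case using step.hyps(3) unfolding kneser_adj_def by auto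
  qed
  have compx: "comp_of star kneser_adj x = {x}" if "x \<in> star" for x
    using reach that reach_in.refl[of x star kneser_adj] unfolding comp_of_def by auto
  have KK: "components_in star kneser_adj = (\<lambda>x. {x}) ` star"
    unfolding components_in_alt using compx by auto
  have cKK: "card (components_in star kneser_adj) = card star"
    unfolding KK by (rule card_image) (auto simp: inj_on_def)
  have e1: "{1,2,3,4} \<in> star" "{1,2,3,5} \<in> star" using n unfolding star_def V_def kV_def by auto
  have fstar: "finite star" using sV fV finite_subset by auto
  have "{{1,2,3,4}, {1,2,3,5::nat}} \<subseteq> star" using e1 by auto
  then have "card {{1,2,3,4}, {1,2,3,5::nat}} \<le> card star" using card_mono[OF fstar] by blast
  moreover have "card {{1,2,3,4}, {1,2,3,5::nat}} = 2"
  proof -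
    have ne: "{1,2,3,4::nat} \<noteq> {1,2,3,5}"
    proof
      assume "{1,2,3,4::nat} = {1,2,3,5}"
      then have "(4::nat) \<in> {1,2,3,5}" by blast
      then show False by simp
    qed
    show ?thesis using ne by (simp only: card_2_iff) blast
  qed
  ultimately have c2: "2 \<le> card star" by simp
  show "vertex_cut V kneser_adj (V - star)"
    unfolding vertex_cut_def num_components_def VV cKK using c2 by auto
  have cV: "card V = n choose 4" unfolding V_def kV_def using n_subsets[of "{1..n}" 4] by simp
  have sub: "(X \<subseteq> {1..n} \<and> 1 \<notin> X) = (X \<subseteq> {2..n})" for X :: "nat set"
  proof
    assume a: "X \<subseteq> {1..n} \<and> 1 \<notin> X"
    show "X \<subseteq> {2..n}"
    proof
      fix x assume "x \<in> X"
      then have "1 \<le> x" "x \<le> n" "x \<noteq> 1" using a by auto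
      then show "x \<in> {2..n}" by simp
    qed
  next
    assume "X \<subseteq> {2..n}" then show "X \<subseteq> {1..n} \<and> 1 \<notin> X" by auto
  qed
  have S0: "V - star = {X. X \<subseteq> {2..n} \<and> card X = 4}" unfolding star_def V_def kV_def
    using sub by blast
  have cS0: "card (V - star) = (n - 1) choose 4" unfolding S0 using n_subsets[of "{2..n}" 4] by simp
  have cstar: "card star + card (V - star) = n choose 4"
    using card_Diff_subset[OF fstar sV] card_mono[OF fV sV] cV by simp
  have split: "n choose 4 = ((n - 1) choose 3) + ((n - 1) choose 4)"
    using choose_reduce_nat[of n 4] n by simp
  have cs: "card star = (n - 1) choose 3" using cstar cS0 split by simp
  have abs: "4 * (n choose 4) = n * ((n - 1) choose 3)"
  proof -
    have "Suc 3 * (Suc (n - 1) choose Suc 3) = Suc (n - 1) * ((n - 1) choose 3)" by (rule Suc_times_binomial)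
    moreover have "Suc (n - 1) = n" using n by simp
    ultimately show ?thesis by simp
  qed
  have key: "(n - 4) * card star = 4 * card (V - star)"
  proof -
    have "(n - 4) * card star + 4 * card star = n * card star"
      using n by (simp add: add_mult_distrib[symmetric])
    moreover have "n * card star = 4 * card star + 4 * card (V - star)"
      using abs cs cstar by simp
    ultimately show ?thesis by simp
  qed
  have "real (n - 4) * real (card star) = 4 * real (card (V - star))" using key
    by (metis of_nat_mult of_nat_numeral)
  moreover have "real (n - 4) = real n - 4" using n by simp
  moreover have "real (card star) > 0" using c2 by simp
  ultimately show "real (card (V - star)) / real (num_components (V - (V - star)) kneser_adj) = real n / 4 - 1"
    unfolding num_components_def VV cKK by (simp add: field_simps)
qed

lemma ratio_lower:
  fixes n :: nat and S :: "nat set set"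
  assumes n: "13 \<le> n" and cut: "vertex_cut (kneser_vertices n 4) kneser_adj S"
  shows "real n / 4 - 1 \<le> real (card S) / real (num_components (kneser_vertices n 4 - S) kneser_adj)"
proof -
  define c where "c = num_components (kneser_vertices n 4 - S) kneser_adj"
  have SV: "S \<subseteq> kneser_vertices n 4" and c2: "2 \<le> c" using cut unfolding vertex_cut_def c_def by auto
  have "(n - 4) * c \<le> 4 * card S"
    using cut_bound[OF n SV] c2 unfolding c_def num_components_def by simp
  then have "real (n - 4) * real c \<le> 4 * real (card S)" by (metis of_nat_le_iff of_nat_mult of_nat_numeral)
  moreover have "real (n - 4) = real n - 4" using n by simp
  moreover have "real c > 0" using c2 by simp
  ultimately show ?thesis unfolding c_def[symmetric] by (simp add: field_simps)
qed

theorem theorem5p1: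
  fixes n :: nat
  assumes "n \<ge> 13"
  shows "toughness (kneser_vertices n 4) kneser_adj = real n / 4 - 1 \<and>
         (\<forall>S. vertex_cut (kneser_vertices n 4) kneser_adj S \<and>
              real (card S) / real (num_components (kneser_vertices n 4 - S) kneser_adj)
                = real n / 4 - 1 \<longrightarrow>
              (\<exists>I. max_independent_set (kneser_vertices n 4) kneser_adj I \<and>
                   S = kneser_vertices n 4 - I))"
proof
  have n: "13 \<le> n" using assms .
  define V where "V = kneser_vertices n 4"
  define f where "f S = real (card S) / real (num_components (V - S) kneser_adj)" for S
  define T where "T = {S. vertex_cut V kneser_adj S}"
  define star where "star = {X\<in>V. (1::nat) \<in> X}"
  have S0T: "V - star \<in> T" using star_cut(1)[OF n] unfolding T_def V_def star_def by simp
  have fS0: "f (V - star) = real n / 4 - 1" using star_cut(2)[OF n] unfolding f_def V_def star_def by simp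
  have low: "real n / 4 - 1 \<le> f S" if "S \<in> T" for S
    using ratio_lower[OF n] that unfolding T_def f_def V_def by simp
  have "toughness V kneser_adj = (INF S\<in>T. f S)" unfolding toughness_def T_def f_def ..
  moreover have "(INF S\<in>T. f S) = real n / 4 - 1"
  proof (rule antisym)
    have "bdd_below (f ` T)" by (rule bdd_belowI[where m="real n / 4 - 1"]) (use low in auto)
    then have "(INF S\<in>T. f S) \<le> f (V - star)" by (rule cINF_lower[OF _ S0T])
    then show "(INF S\<in>T. f S) \<le> real n / 4 - 1" using fS0 by simp
    show "real n / 4 - 1 \<le> (INF S\<in>T. f S)" using S0T low by (intro cINF_greatest) auto
  qed
  ultimately show "toughness (kneser_vertices n 4) kneser_adj = real n / 4 - 1" unfolding V_def by simp
next
  have n: "13 \<le> n" using assms .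
  show "\<forall>S. vertex_cut (kneser_vertices n 4) kneser_adj S \<and>
              real (card S) / real (num_components (kneser_vertices n 4 - S) kneser_adj)
                = real n / 4 - 1 \<longrightarrow>
              (\<exists>I. max_independent_set (kneser_vertices n 4) kneser_adj I \<and>
                   S = kneser_vertices n 4 - I)"
  proof (intro allI impI)
    fix S assume a: "vertex_cut (kneser_vertices n 4) kneser_adj S \<and>
              real (card S) / real (num_components (kneser_vertices n 4 - S) kneser_adj) = real n / 4 - 1"
    define V where "V = kneser_vertices n 4"
    define U where "U = V - S"
    define KK where "KK = components_in U kneser_adj"
    have SV: "S \<subseteq> V" and c2: "2 \<le> card KK" using a unfolding vertex_cut_def num_components_def V_def U_def KK_def by auto
    have fV: "finite V" unfolding V_def by (rule finite_kV)
    have rat: "real (card S) / real (card KK) = real n / 4 - 1"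
      using a unfolding num_components_def V_def U_def KK_def by simp
    have "real (card S) = (real n / 4 - 1) * real (card KK)" using rat c2 by (simp add: field_simps)
    then have e1: "4 * real (card S) = (real n - 4) * real (card KK)" by (simp add: field_simps)
    have e2: "real (n - 4) = real n - 4" using n by simp
    have "real (4 * card S) = real ((n - 4) * card KK)" unfolding of_nat_mult e2 using e1 by simp
    then have eq: "(n - 4) * card KK = 4 * card S" by (simp only: of_nat_eq_iff)
    have singles: "\<forall>K\<in>KK. card K = 1"
      using cut_equality[OF n SV[unfolded V_def]] c2 eq unfolding KK_def U_def V_def by simp
    have compx: "comp_of U kneser_adj x = {x}" if x: "x \<in> U" for x
    proof -
      have "comp_of U kneser_adj x \<in> KK" using comp_of_in[OF x] KK_def by simp
      then have "card (comp_of U kneser_adj x) = 1" using singles by simp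
      moreover have "x \<in> comp_of U kneser_adj x" using comp_of_self[OF x] .
      ultimately show ?thesis by (metis card_1_singletonE singletonD)
    qed
    have KKU: "KK = (\<lambda>x. {x}) ` U" unfolding KK_def components_in_alt using compx by auto
    have cKK: "card KK = card U" unfolding KKU by (rule card_image) (auto simp: inj_on_def)
    have inter: "x \<inter> y \<noteq> {}" if x: "x \<in> U" and y: "y \<in> U" for x y
    proof (cases "x = y")
      case True then show ?thesis using x kV_ne U_def V_def by auto
    next
      case False
      have "comp_of U kneser_adj x \<in> KK" "comp_of U kneser_adj y \<in> KK"
        using comp_of_in[OF x] comp_of_in[OF y] KK_def by auto
      moreover have "comp_of U kneser_adj x \<noteq> comp_of U kneser_adj y" using compx x y False by auto
      ultimately have "\<not> kneser_adj x y"
        using kcomp_no_edge[of "comp_of U kneser_adj x" U "comp_of U kneser_adj y" x y]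
          comp_of_self[OF x] comp_of_self[OF y] KK_def by auto
      then show ?thesis unfolding kneser_adj_def .
    qed
    have indU: "independent_set V kneser_adj U"
      unfolding independent_set_def kneser_adj_def U_def using inter U_def by auto
    have cV: "card V = n choose 4" unfolding V_def kV_def using n_subsets[of "{1..n}" 4] by simp
    have cVS: "card V = card S + card U" unfolding U_def
      using card_Diff_subset[of S V] fV SV card_mono[OF fV SV] by (simp add: finite_subset)
    have nU: "card U * n = 4 * (n choose 4)"
    proof -
      have "(n - 4) * card U + 4 * card U = n * card U" using n by (simp add: add_mult_distrib[symmetric])
      then show ?thesis using eq cKK cVS cV by (simp add: algebra_simps)
    qed
    have maxU: "card J \<le> card U" if J: "independent_set V kneser_adj J" for J
    proof -
      have JV: "J \<subseteq> V" and nJ: "\<forall>x\<in>J. \<forall>y\<in>J. \<not> kneser_adj x y" using J unfolding independent_set_def by auto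
      have "card J * n \<le> 4 * (n choose 4)"
      proof (rule ekr_general(1)[of "{1..n}" n J])
        show "finite {1..n}" by simp
        show "card {1..n} = n" by simp
        show "8 \<le> n" using n by simp
        show "J \<subseteq> {A. A \<subseteq> {1..n} \<and> card A = 4}" using JV unfolding V_def kV_def by auto
        fix A B assume "A \<in> J" "B \<in> J"
        then show "A \<inter> B \<noteq> {}" using nJ unfolding kneser_adj_def by auto
      qed
      then have "card J * n \<le> card U * n" using nU by simp
      then show ?thesis using n by simp
    qed
    have "max_independent_set V kneser_adj U"
      unfolding max_independent_set_def using indU maxU by auto
    moreover have "S = V - U" unfolding U_def using SV by auto
    ultimately show "\<exists>I. max_independent_set (kneser_vertices n 4) kneser_adj I \<and> S = kneser_vertices n 4 - I"
      unfolding V_def by blast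
  qed
qed

end
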